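(* Let $\overline{\mathsf{HAL}}$ be the symmetric function defined below. Then $$\operatorname{Comm}\circ\Sigma\operatorname{PreLie}=p_1-\bigl(p_1\,\partial_{p_1}\overline{\mathsf{HAL}}-\overline{\mathsf{HAL}}\bigr).$$
   Context: Symmetric functions are formal power series in the power sums $p_1,p_2,\dots$ over $\mathbb{Q}$; $\partial_{p_1}$ is the partial derivative in $p_1$. Plethysm: $p_k\circ f$ replaces each $p_j$ in $f$ by $p_{jk}$ (rational constants fixed), and $g\circ f$ substitutes $p_k\circ f$ for $p_k$ in $g$. Suspension: $\Sigma f=-f(-p_1,-p_2,\dots)$. $\operatorname{Comm}=\exp(\sum_{k\ge1}p_k/k)-1$; $\operatorname{Lie}=\sum_{k\ge1}\frac{\mu(k)}{k}(-\ln(1-p_k))$ ($\mu$ number-theoretic Möbius function). $\operatorname{PreLie}$ is the Frobenius characteristic of the permutation representations of $\mathfrak{S}_n$ on rooted trees with vertex set $\{1,\dots,n\}$, equivalently the unique solution without constant term of $\operatorname{PreLie}=p_1(1+\operatorname{Comm}\circ\operatorname{PreLie})$. The symmetric functions $\overline{\mathsf{HAL}}^{pa},\overline{\mathsf{HAL}}^{p},\overline{\mathsf{HAL}}^{a},\overline{\mathsf{HAL}}$ are uniquely determined by $\overline{\mathsf{HAL}}^{pa}=p_1\cdot([p_1/(1+p_1)]\circ\operatorname{Comm}\circ[p_1-\overline{\mathsf{HAL}}^{pa}])$, $\overline{\mathsf{HAL}}^{p}=p_1\cdot([\Sigma\operatorname{Lie}]\circ\operatorname{Comm}\circ[p_1-\overline{\mathsf{HAL}}^{pa}])$,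 $\overline{\mathsf{HAL}}^{a}=[\operatorname{Comm}-p_1]\circ[p_1-\overline{\mathsf{HAL}}^{pa}]$, and $\overline{\mathsf{HAL}}=\overline{\mathsf{HAL}}^{p}+\overline{\mathsf{HAL}}^{a}-\overline{\mathsf{HAL}}^{pa}$. *)

theory Defs
  imports Complex_Main "HOL-Library.Multiset" "HOL-Computational_Algebra.Squarefree"
          "HOL-Computational_Algebra.Primes"
begin

text \<open>Symmetric functions over the rationals, as formal power series in the power sums.
  A monomial p_(i1+1) * ... * p_(ir+1) is encoded by the multiset {#i1,...,ir#} of naturals
  (the element i stands for the power sum p_(i+1)); a symmetric function is its
  coefficient function.\<close>

type_synonym sf = "nat multiset \<Rightarrow> rat"

definition sf_deg :: "nat multiset \<Rightarrow> nat" where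
  "sf_deg l = sum_mset (image_mset Suc l)"

definition sf_one :: sf where
  "sf_one = (\<lambda>l. if l = {#} then 1 else 0)"

text \<open>the power sum p_k (for k >= 1)\<close>
definition pvar :: "nat \<Rightarrow> sf" where
  "pvar k = (\<lambda>l. if l = {#k - 1#} then 1 else 0)"

definition sf_add :: "sf \<Rightarrow> sf \<Rightarrow> sf" where
  "sf_add f g = (\<lambda>l. f l + g l)"

definition sf_sub :: "sf \<Rightarrow> sf \<Rightarrow> sf" where
  "sf_sub f g = (\<lambda>l. f l - g l)"

definition sf_smult :: "rat \<Rightarrow> sf \<Rightarrow> sf" where
  "sf_smult c f = (\<lambda>l. c * f l)"

definition sf_mult :: "sf \<Rightarrow> sf \<Rightarrow> sf" where
  "sf_mult f g = (\<lambda>l. \<Sum>m\<in>{m. m \<subseteq># l}. f m * g (l - m))"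

primrec sf_pow :: "sf \<Rightarrow> nat \<Rightarrow> sf" where
  "sf_pow h 0 = sf_one"
| "sf_pow h (Suc n) = sf_mult h (sf_pow h n)"

definition sf_prod_list :: "sf list \<Rightarrow> sf" where
  "sf_prod_list xs = foldr sf_mult xs sf_one"

text \<open>Substitution of a series h without constant term into a univariate power series
  with coefficients a: sum over n of a n * h^n (coefficientwise a finite sum).\<close>
definition psubst :: "(nat \<Rightarrow> rat) \<Rightarrow> sf \<Rightarrow> sf" where
  "psubst a h = (\<lambda>l. \<Sum>n\<in>{..sf_deg l}. a n * sf_pow h n l)"

definition sf_exp :: "sf \<Rightarrow> sf" where
  "sf_exp h = psubst (\<lambda>n. 1 / fact n) h"

definition sf_mlog :: "sf \<Rightarrow> sf" where
  "sf_mlog h = psubst (\<lambda>n. if n = 0 then 0 else 1 / of_nat n) h"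

text \<open>Sum over k >= 1 of F k, for families where F k has no terms of degree < k.\<close>
definition sf_series :: "(nat \<Rightarrow> sf) \<Rightarrow> sf" where
  "sf_series F = (\<lambda>l. \<Sum>k\<in>{1..sf_deg l}. F k l)"

text \<open>Plethysm p_k o f: replace each p_j by p_(jk).\<close>
definition pleth_pk :: "nat \<Rightarrow> sf \<Rightarrow> sf" where
  "pleth_pk k f = (\<lambda>l. if (\<forall>i\<in>#l. k dvd Suc i)
                        then f (image_mset (\<lambda>i. Suc i div k - 1) l) else 0)"

definition pleth_mono :: "nat multiset \<Rightarrow> sf \<Rightarrow> sf" where
  "pleth_mono l f = sf_prod_list (map (\<lambda>i. pleth_pk (Suc i) f) (sorted_list_of_multiset l))"

text \<open>Plethysm g o f (for f without constant term).\<close>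
definition sf_comp :: "sf \<Rightarrow> sf \<Rightarrow> sf" where
  "sf_comp g f = (\<lambda>l. \<Sum>m\<in>{m. sf_deg m \<le> sf_deg l}. g m * pleth_mono m f l)"

text \<open>Suspension: Sigma f = - f(-p1,-p2,...)\<close>
definition susp :: "sf \<Rightarrow> sf" where
  "susp f = (\<lambda>l. - ((-1) ^ size l * f l))"

definition dp1 :: "sf \<Rightarrow> sf" where
  "dp1 f = (\<lambda>l. of_nat (count l 0 + 1) * f (add_mset 0 l))"

definition moebius :: "nat \<Rightarrow> rat" where
  "moebius n = (if squarefree n then (-1) ^ card (prime_factors n) else 0)"

definition Comm :: sf where
  "Comm = sf_sub (sf_exp (sf_series (\<lambda>k. sf_smult (1 / of_nat k) (pvar k)))) sf_one"

definition Lie :: sf where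
  "Lie = sf_series (\<lambda>k. sf_smult (moebius k / of_nat k) (sf_mlog (pvar k)))"

definition p1_over_1_plus_p1 :: sf where
  "p1_over_1_plus_p1 = psubst (\<lambda>n. if n = 0 then 0 else (-1) ^ (n - 1)) (pvar 1)"

end

theory Submission
  imports Defs "HOL-Computational_Algebra.Formal_Power_Series"
begin


lemma sf_deg_empty[simp]: "sf_deg {#} = 0"
  by (simp add: sf_deg_def)

lemma sf_deg_add_mset[simp]: "sf_deg (add_mset i l) = Suc i + sf_deg l"
  by (simp add: sf_deg_def)

lemma sf_deg_plus[simp]: "sf_deg (a + b) = sf_deg a + sf_deg b"
  by (simp add: sf_deg_def)

lemma sf_deg_single[simp]: "sf_deg {#i#} = Suc i"
  by (simp add: sf_deg_def)

lemma sf_deg_eq_0_iff[simp]: "sf_deg l = 0 \<longleftrightarrow> l = {#}"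
  by (induction l) auto

lemma size_le_sf_deg: "size l \<le> sf_deg l"
  by (induction l) auto

lemma elem_lt_sf_deg: "i \<in># l \<Longrightarrow> i < sf_deg l"
  by (induction l) auto

lemma sf_deg_mono: "a \<subseteq># b \<Longrightarrow> sf_deg a \<le> sf_deg b"
  by (metis le_add1 sf_deg_plus subset_mset.add_diff_inverse)

lemma finite_deg_le: "finite {m. sf_deg m \<le> n}"
proof -
  have "{m. sf_deg m \<le> n} \<subseteq> (\<Union>s\<in>{..n}. multisets_of_size {..<n} s)"
  proof
    fix m assume "m \<in> {m. sf_deg m \<le> n}"
    hence "sf_deg m \<le> n" by simp
    moreover have "set_mset m \<subseteq> {..<n}" using elem_lt_sf_deg \<open>sf_deg m \<le> n\<close>
      by (auto dest: elem_lt_sf_deg)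
    ultimately show "m \<in> (\<Union>s\<in>{..n}. multisets_of_size {..<n} s)"
      using size_le_sf_deg[of m] by (auto simp: multisets_of_size_def)
  qed
  moreover have "finite (\<Union>s\<in>{..n}. multisets_of_size {..<n} s)" by auto
  ultimately show ?thesis by (rule finite_subset)
qed

lemma finite_subseteq_mset: "finite {m. m \<subseteq># (l::nat multiset)}"
  by (rule finite_subset[OF _ finite_deg_le[of "sf_deg l"]]) (auto intro: sf_deg_mono)

definition splits :: "nat multiset \<Rightarrow> (nat multiset \<times> nat multiset) set" where
  "splits l = {(a, b). a + b = l}"

lemma finite_splits[simp]: "finite (splits l)"
proof -
  have "splits l = (\<lambda>m. (m, l - m)) ` {m. m \<subseteq># l}"
    by (auto simp: splits_def image_iff)
  thus ?thesis using finite_subseteq_mset by simp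
qed

lemma sf_mult_splits: "sf_mult f g l = (\<Sum>(a,b)\<in>splits l. f a * g b)"
  unfolding sf_mult_def
  by (rule sum.reindex_bij_witness[where i = fst and j = "\<lambda>m. (m, l - m)"])
     (auto simp: splits_def)

definition triples :: "nat multiset \<Rightarrow> (nat multiset \<times> nat multiset \<times> nat multiset) set" where
  "triples l = {(a, b, c). a + b + c = l}"

lemma splits_nested_right:
  "(\<Sum>(a,x)\<in>splits l. \<Sum>(b,c)\<in>splits x. F a b c) = (\<Sum>(a,b,c)\<in>triples l. F a b c)"
proof -
  have "(\<Sum>(a,x)\<in>splits l. \<Sum>(b,c)\<in>splits x. F a b c)
      = (\<Sum>(p,q)\<in>Sigma (splits l) (\<lambda>p. splits (snd p)). F (fst p) (fst q) (snd q))"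
    by (subst sum.Sigma[symmetric]) (auto simp: split_beta)
  also have "\<dots> = (\<Sum>(a,b,c)\<in>triples l. F a b c)"
    by (rule sum.reindex_bij_witness[where j = "\<lambda>((a,x),(b,c)). (a,b,c)"
          and i = "\<lambda>(a,b,c). ((a, b + c), (b, c))"])
       (auto simp: splits_def triples_def add.assoc)
  finally show ?thesis .
qed

lemma splits_nested_left:
  "(\<Sum>(x,c)\<in>splits l. \<Sum>(a,b)\<in>splits x. F a b c) = (\<Sum>(a,b,c)\<in>triples l. F a b c)"
proof -
  have "(\<Sum>(x,c)\<in>splits l. \<Sum>(a,b)\<in>splits x. F a b c)
      = (\<Sum>(p,q)\<in>Sigma (splits l) (\<lambda>p. splits (fst p)). F (fst q) (snd q) (snd p))"
    by (subst sum.Sigma[symmetric]) (auto simp: split_beta)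
  also have "\<dots> = (\<Sum>(a,b,c)\<in>triples l. F a b c)"
    by (rule sum.reindex_bij_witness[where j = "\<lambda>((x,c),(a,b)). (a,b,c)"
          and i = "\<lambda>(a,b,c). ((a + b, c), (a, b))"])
       (auto simp: splits_def triples_def add.assoc)
  finally show ?thesis .
qed

lemma sf_mult_assoc: "sf_mult (sf_mult f g) h = sf_mult f (sf_mult g h)"
proof
  fix l
  have "sf_mult (sf_mult f g) h l = (\<Sum>(x,c)\<in>splits l. \<Sum>(a,b)\<in>splits x. f a * g b * h c)"
    by (simp add: sf_mult_splits sum_distrib_right split_beta)
  also have "\<dots> = (\<Sum>(a,b,c)\<in>triples l. f a * g b * h c)"
    by (rule splits_nested_left)
  also have "\<dots> = (\<Sum>(a,x)\<in>splits l. \<Sum>(b,c)\<in>splits x. f a * g b * h c)"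
    by (rule splits_nested_right[symmetric])
  also have "\<dots> = sf_mult f (sf_mult g h) l"
    by (simp add: sf_mult_splits sum_distrib_left split_beta mult.assoc)
  finally show "sf_mult (sf_mult f g) h l = sf_mult f (sf_mult g h) l" .
qed

lemma sf_mult_commute: "sf_mult f g = sf_mult g f"
proof
  fix l
  show "sf_mult f g l = sf_mult g f l"
    unfolding sf_mult_splits
    by (rule sum.reindex_bij_witness[where j = "\<lambda>(a,b). (b,a)" and i = "\<lambda>(a,b). (b,a)"])
       (auto simp: splits_def add.commute)
qed

lemma sf_mult_one: "sf_mult sf_one g = g"
proof
  fix l
  have "sf_mult sf_one g l = (\<Sum>m\<in>{m. m \<subseteq># l}. if m = {#} then g l else 0)"
    unfolding sf_mult_def sf_one_def by (intro sum.cong) auto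
  also have "\<dots> = g l" by (subst sum.delta) (auto simp: finite_subseteq_mset)
  finally show "sf_mult sf_one g l = g l" .
qed

lemma sf_mult_distrib: "sf_mult (\<lambda>l. f l + g l) h = (\<lambda>l. sf_mult f h l + sf_mult g h l)"
  by (auto simp: sf_mult_def sum.distrib algebra_simps)

lemma sf_mult_zero: "sf_mult (\<lambda>l. 0) h = (\<lambda>l. 0)"
  by (auto simp: sf_mult_def)

section \<open>The ring of symmetric functions\<close>

typedef S = "UNIV :: sf set" morphisms cf Ab by auto

setup_lifting type_definition_S

instantiation S :: comm_ring_1
begin
lift_definition zero_S :: S is "\<lambda>l. 0" .
lift_definition one_S :: S is sf_one .
lift_definition plus_S :: "S \<Rightarrow> S \<Rightarrow> S" is "\<lambda>f g l. f l + g l" .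
lift_definition minus_S :: "S \<Rightarrow> S \<Rightarrow> S" is "\<lambda>f g l. f l - g l" .
lift_definition uminus_S :: "S \<Rightarrow> S" is "\<lambda>f l. - f l" .
lift_definition times_S :: "S \<Rightarrow> S \<Rightarrow> S" is sf_mult .
instance
proof
  fix a b c :: S
  show "a * b * c = a * (b * c)" by transfer (rule sf_mult_assoc)
  show "a * b = b * a" by transfer (rule sf_mult_commute)
  show "1 * a = a" by transfer (rule sf_mult_one)
  show "a + b + c = a + (b + c)" by transfer (simp add: add.assoc)
  show "a + b = b + a" by transfer (simp add: add.commute)
  show "0 + a = a" by transfer simp
  show "- a + a = 0" by transfer simp
  show "a - b = a + - b" by transfer simp
  show "(a + b) * c = a * c + b * c" by transfer (rule sf_mult_distrib)
  show "(0::S) \<noteq> 1" by transfer (auto simp: sf_one_def fun_eq_iff)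
qed
end

lemma cf_eqI: "(\<And>l. cf x l = cf y l) \<Longrightarrow> x = y"
  by (metis cf_inject ext)

lemma cf_zero[simp]: "cf 0 l = 0" by transfer simp
lemma cf_one: "cf 1 = sf_one" by transfer simp
lemma cf_add[simp]: "cf (x + y) l = cf x l + cf y l" by transfer simp
lemma cf_diff[simp]: "cf (x - y) l = cf x l - cf y l" by transfer simp
lemma cf_uminus[simp]: "cf (- x) l = - cf x l" by transfer simp
lemma cf_mult: "cf (x * y) l = (\<Sum>(a,b)\<in>splits l. cf x a * cf y b)"
  by transfer (simp add: sf_mult_splits)
lemma cf_mult': "cf (x * y) = sf_mult (cf x) (cf y)" by transfer simp

lemma cf_sum[simp]: "cf (sum f A) l = (\<Sum>i\<in>A. cf (f i) l)"
  by (induction A rule: infinite_finite_induct) auto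

lemma cf_power: "cf (x ^ n) = sf_pow (cf x) n"
  by (induction n) (auto simp: cf_one cf_mult')

lemma cf_one_empty[simp]: "cf 1 {#} = 1" and cf_one_ne[simp]: "l \<noteq> {#} \<Longrightarrow> cf 1 l = 0"
  by (auto simp: cf_one sf_one_def)

lemma splits_empty[simp]: "splits {#} = {({#},{#})}"
  by (auto simp: splits_def)


unbundle fps_syntax

section \<open>Low-order vanishing\<close>

definition low :: "nat \<Rightarrow> S \<Rightarrow> bool" where
  "low n x \<longleftrightarrow> (\<forall>l. sf_deg l < n \<longrightarrow> cf x l = 0)"

lemma lowI: "(\<And>l. sf_deg l < n \<Longrightarrow> cf x l = 0) \<Longrightarrow> low n x"
  by (auto simp: low_def)

lemma lowD: "low n x \<Longrightarrow> sf_deg l < n \<Longrightarrow> cf x l = 0"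
  by (auto simp: low_def)

lemma low_0[simp]: "low 0 x" by (auto simp: low_def)
lemma low_mono: "low n x \<Longrightarrow> m \<le> n \<Longrightarrow> low m x" by (auto simp: low_def)
lemma low_zero[simp]: "low n 0" by (auto simp: low_def)
lemma low_add: "low n x \<Longrightarrow> low n y \<Longrightarrow> low n (x + y)" by (auto simp: low_def)
lemma low_diff: "low n x \<Longrightarrow> low n y \<Longrightarrow> low n (x - y)" by (auto simp: low_def)
lemma low_uminus: "low n x \<Longrightarrow> low n (- x)" by (auto simp: low_def)
lemma low_uminus_iff[simp]: "low n (- x) \<longleftrightarrow> low n x" by (auto simp: low_def)
lemma low_sum: "(\<And>i. i \<in> A \<Longrightarrow> low n (f i)) \<Longrightarrow> low n (sum f A)"
  by (induction A rule: infinite_finite_induct) (auto intro: low_add)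

lemma low_mult: "low a x \<Longrightarrow> low b y \<Longrightarrow> low (a + b) (x * y)"
proof (rule lowI)
  fix l assume x: "low a x" and y: "low b y" and l: "sf_deg l < a + b"
  have "cf (x * y) l = (\<Sum>(c,d)\<in>splits l. cf x c * cf y d)" by (rule cf_mult)
  also have "\<dots> = (\<Sum>(c,d)\<in>splits l. 0)"
  proof (intro sum.cong refl)
    fix p assume "p \<in> splits l"
    then obtain c d where p: "p = (c, d)" "c + d = l" by (auto simp: splits_def)
    hence "sf_deg c < a \<or> sf_deg d < b" using l by auto
    thus "(case p of (c, d) \<Rightarrow> cf x c * cf y d) = (case p of (c, d) \<Rightarrow> 0)"
      using x y p by (auto simp: low_def)
  qed
  finally show "cf (x * y) l = 0" by simp
qed

lemma low_mult_left: "low a x \<Longrightarrow> low a (x * y)"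
  using low_mult[of a x 0 y] by simp
lemma low_mult_right: "low a y \<Longrightarrow> low a (x * y)"
  using low_mult[of 0 x a y] by simp

lemma low_power: "low k x \<Longrightarrow> low (k * n) (x ^ n)"
proof (induction n)
  case 0 thus ?case by simp
next
  case (Suc n)
  hence "low (k + k * n) (x * x ^ n)" by (intro low_mult) auto
  thus ?case by simp
qed

lemma low_power1: "low 1 x \<Longrightarrow> low n (x ^ n)"
  using low_power[of 1 x n] by simp

lemma low_power_diff: "low n (a - b) \<Longrightarrow> low n (a ^ m - b ^ m)"
proof (induction m)
  case 0 thus ?case by simp
next
  case (Suc m)
  have "a ^ Suc m - b ^ Suc m = a * (a ^ m - b ^ m) + (a - b) * b ^ m"
    by (simp add: algebra_simps)
  moreover have "low n (a * (a ^ m - b ^ m))" by (rule low_mult_right) (use Suc in auto)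
  moreover have "low n ((a - b) * b ^ m)" by (rule low_mult_left) (use Suc in auto)
  ultimately show ?case by (simp add: low_add)
qed

lemma eq_by_low: "(\<And>n. low n (x - y)) \<Longrightarrow> x = y"
proof (rule cf_eqI)
  fix l assume "\<And>n. low n (x - y)"
  hence "cf (x - y) l = 0" using lowD[of "Suc (sf_deg l)" "x - y" l] by auto
  thus "cf x l = cf y l" by simp
qed

lemma eq_by_approx:
  assumes "\<And>N. \<exists>a. low (Suc N) (x - a) \<and> low (Suc N) (y - a)"
  shows "x = y"
proof (rule eq_by_low)
  fix n
  obtain a where a: "low (Suc n) (x - a)" "low (Suc n) (y - a)" using assms by blast
  have "low (Suc n) ((x - a) - (y - a))" by (rule low_diff[OF a])
  hence "low (Suc n) (x - y)" by simp
  thus "low n (x - y)" by (rule low_mono) simp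
qed

definition K :: "rat \<Rightarrow> S" where
  "K c = Ab (\<lambda>l. if l = {#} then c else 0)"

lemma cf_K: "cf (K c) l = (if l = {#} then c else 0)"
  by (simp add: K_def Ab_inverse)

lemma cf_K_mult[simp]: "cf (K c * x) l = c * cf x l"
proof -
  have "cf (K c * x) l = (\<Sum>p\<in>splits l. if p = ({#}, l) then c * cf x l else 0)"
    unfolding cf_mult by (intro sum.cong) (auto simp: cf_K splits_def split: if_splits)
  also have "\<dots> = c * cf x l" by (subst sum.delta) (auto simp: splits_def simp del: finite_splits, simp add: finite_splits[unfolded splits_def])
  finally show ?thesis .
qed

lemma K_1[simp]: "K 1 = 1"
  by (rule cf_eqI) (simp add: cf_K cf_one sf_one_def)
lemma K_0[simp]: "K 0 = 0"
  by (rule cf_eqI) (simp add: cf_K)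
lemma K_add: "K (a + b) = K a + K b"
  by (rule cf_eqI) (simp add: cf_K)
lemma K_mult: "K (a * b) = K a * K b"
  by (rule cf_eqI) (simp add: cf_K)
lemma K_uminus: "K (- a) = - K a"
  by (rule cf_eqI) (simp add: cf_K)
lemma K_sum: "K (sum f A) = (\<Sum>i\<in>A. K (f i))"
  by (induction A rule: infinite_finite_induct) (auto simp: K_add)
lemma low_K_mult: "low n x \<Longrightarrow> low n (K c * x)"
  by (auto simp: low_def)

lemma cf_neg1_power_mult: "cf ((-1) ^ n * x) l = (-1) ^ n * cf x l"
  by (cases "even n") auto

section \<open>Substitution into univariate power series\<close>

definition ev :: "rat fps \<Rightarrow> S \<Rightarrow> S" where
  "ev A u = Ab (psubst (fps_nth A) (cf u))"

lemma cf_ev: "cf (ev A u) l = (\<Sum>n\<le>sf_deg l. A $ n * cf (u ^ n) l)"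
  by (simp add: ev_def Ab_inverse psubst_def cf_power)

definition T :: "nat \<Rightarrow> rat fps \<Rightarrow> S \<Rightarrow> S" where
  "T N A u = (\<Sum>n\<le>N. K (A $ n) * u ^ n)"

lemma cf_ev_ext:
  assumes "low 1 u" "sf_deg l \<le> N"
  shows "cf (ev A u) l = (\<Sum>n\<le>N. A $ n * cf (u ^ n) l)"
proof -
  have "(\<Sum>n\<le>N. A $ n * cf (u ^ n) l) = (\<Sum>n\<le>sf_deg l. A $ n * cf (u ^ n) l)"
  proof (rule sum.mono_neutral_right)
    show "\<forall>i\<in>{..N} - {..sf_deg l}. A $ i * cf (u ^ i) l = 0"
      using lowD[OF low_power1[OF assms(1)]] by auto
  qed (use assms in auto)
  thus ?thesis by (simp add: cf_ev)
qed

lemma ev_approx: "low 1 u \<Longrightarrow> low (Suc N) (ev A u - T N A u)"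
  by (rule lowI) (simp add: cf_ev_ext T_def)

lemma cf_ev_empty: "cf (ev A u) {#} = A $ 0"
  by (simp add: cf_ev cf_one sf_one_def)

lemma ev_add: "ev (A + B) u = ev A u + ev B u"
  by (rule cf_eqI) (simp add: cf_ev algebra_simps sum.distrib)

lemma ev_diff: "ev (A - B) u = ev A u - ev B u"
  by (rule cf_eqI) (simp add: cf_ev algebra_simps sum_subtractf)

lemma ev_uminus: "ev (- A) u = - ev A u"
  by (rule cf_eqI) (simp add: cf_ev sum_negf)

lemma ev_const_mult: "ev (fps_const c * A) u = K c * ev A u"
  by (rule cf_eqI) (simp add: cf_ev sum_distrib_left mult.assoc)

lemma ev_0[simp]: "ev 0 u = 0"
  by (rule cf_eqI) (simp add: cf_ev)

lemma ev_sum: "ev (sum f I) u = (\<Sum>i\<in>I. ev (f i) u)"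
  by (induction I rule: infinite_finite_induct) (auto simp: ev_add)

lemma ev_1: "low 1 u \<Longrightarrow> ev 1 u = 1"
proof (rule cf_eqI)
  fix l
  have "(\<Sum>n\<le>sf_deg l. (1::rat fps) $ n * cf (u ^ n) l) = (\<Sum>n\<in>{0}. (1::rat fps) $ n * cf (u ^ n) l)"
    by (rule sum.mono_neutral_right) auto
  thus "cf (ev 1 u) l = cf 1 l"
    unfolding cf_ev by simp
qed

lemma ev_X: "low 1 u \<Longrightarrow> ev fps_X u = u"
proof (rule cf_eqI)
  fix l assume u: "low 1 u"
  show "cf (ev fps_X u) l = cf u l"
  proof (cases "l = {#}")
    case True thus ?thesis using u by (simp add: cf_ev lowD)
  next
    case False
    hence "1 \<le> sf_deg l" by (cases l) auto
    hence "(\<Sum>n\<le>sf_deg l. fps_X $ n * cf (u ^ n) l) = (\<Sum>n\<in>{1}. fps_X $ n * cf (u ^ n) l)"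
      by (intro sum.mono_neutral_right) (auto simp: fps_X_def)
    thus ?thesis unfolding cf_ev by simp
  qed
qed

lemma low_ev: "low 1 u \<Longrightarrow> low 1 (ev A u) \<longleftrightarrow> A $ 0 = 0"
  by (auto simp: low_def cf_ev_empty)

lemma low_ev_k: assumes "low k u" "1 \<le> k" "A $ 0 = 0" shows "low k (ev A u)"
proof (rule lowI)
  fix l assume l: "sf_deg l < k"
  have "low 1 u" using assms low_mono by blast
  have "A $ n * cf (u ^ n) l = 0" for n
  proof (cases n)
    case 0 thus ?thesis using assms by simp
  next
    case (Suc m)
    have "low (k * n) (u ^ n)" by (rule low_power[OF assms(1)])
    moreover have "sf_deg l < k * n" using l Suc by (simp add: less_le_trans)
    ultimately show ?thesis by (simp add: lowD)
  qed
  thus "cf (ev A u) l = 0" unfolding cf_ev by (intro sum.neutral) auto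
qed

lemma ev_cont_A:
  assumes "\<And>i. i \<le> N \<Longrightarrow> A $ i = B $ i"
  shows "low (Suc N) (ev A u - ev B u)"
  by (rule lowI) (simp add: cf_ev assms)

lemma T_split:
  "T N A u * T N B u = T N (A * B) u +
     (\<Sum>p\<in>({..N} \<times> {..N}) - {(i,j). i + j \<le> N}. K (A $ fst p * B $ snd p) * u ^ (fst p + snd p))"
proof -
  have fin: "finite ({..N} \<times> {..N})" by simp
  have sub: "{(i,j). i + j \<le> N} \<subseteq> {..N} \<times> {..N}" by auto
  have "T N A u * T N B u = (\<Sum>p\<in>{..N} \<times> {..N}. K (A $ fst p * B $ snd p) * u ^ (fst p + snd p))"
    unfolding T_def sum_product sum.cartesian_product
    by (intro sum.cong) (auto simp: K_mult power_add algebra_simps)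
  also have "\<dots> = (\<Sum>p\<in>({..N} \<times> {..N}) - {(i,j). i + j \<le> N}. K (A $ fst p * B $ snd p) * u ^ (fst p + snd p))
      + (\<Sum>p\<in>{(i,j). i + j \<le> N}. K (A $ fst p * B $ snd p) * u ^ (fst p + snd p))"
    by (rule sum.subset_diff[OF sub fin])
  also have "(\<Sum>p\<in>{(i,j). i + j \<le> N}. K (A $ fst p * B $ snd p) * u ^ (fst p + snd p))
      = (\<Sum>(i,j)\<in>{(i,j). i + j \<le> N}. K (A $ i * B $ j) * u ^ (i + j))"
    by (simp add: split_beta)
  also have "\<dots> = (\<Sum>k\<le>N. \<Sum>i\<le>k. K (A $ i * B $ (k - i)) * u ^ (i + (k - i)))"
    by (rule sum.triangle_reindex_eq)
  also have "\<dots> = T N (A * B) u"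
    unfolding T_def fps_mult_nth
    by (intro sum.cong refl) (auto simp: atLeast0AtMost K_sum sum_distrib_right)
  finally show ?thesis by simp
qed


unbundle fps_syntax

lemma ev_mult:
  assumes u: "low 1 u"
  shows "ev (A * B) u = ev A u * ev B u"
proof (rule eq_by_approx)
  fix N
  let ?R = "(\<Sum>p\<in>({..N} \<times> {..N}) - {(i,j). i + j \<le> N}. K (A $ fst p * B $ snd p) * u ^ (fst p + snd p))"
  have R: "low (Suc N) ?R"
  proof (rule low_sum)
    fix p assume "p \<in> ({..N} \<times> {..N}) - {(i,j). i + j \<le> N}"
    hence "Suc N \<le> fst p + snd p" by auto
    thus "low (Suc N) (K (A $ fst p * B $ snd p) * u ^ (fst p + snd p))"
      by (intro low_K_mult low_mono[OF low_power1[OF u]])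
  qed
  have "ev A u * ev B u - T N (A * B) u =
        (ev A u - T N A u) * ev B u + T N A u * (ev B u - T N B u) + ?R"
    using T_split[of N A u B] by (simp add: algebra_simps)
  moreover have "low (Suc N) ((ev A u - T N A u) * ev B u)"
    by (intro low_mult_left ev_approx u)
  moreover have "low (Suc N) (T N A u * (ev B u - T N B u))"
    by (intro low_mult_right ev_approx u)
  ultimately have "low (Suc N) (ev A u * ev B u - T N (A * B) u)"
    using R by (simp add: low_add)
  thus "\<exists>a. low (Suc N) (ev (A * B) u - a) \<and> low (Suc N) (ev A u * ev B u - a)"
    using ev_approx[OF u] by blast
qed

lemma ev_power: "low 1 u \<Longrightarrow> ev (A ^ n) u = ev A u ^ n"
  by (induction n) (auto simp: ev_1 ev_mult)

lemma ev_neg_arg: "ev A (- u) = ev (Abs_fps (\<lambda>n. (-1) ^ n * A $ n)) u"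
proof (rule cf_eqI)
  fix l
  have "cf ((- u) ^ n) l = (-1) ^ n * cf (u ^ n) l" for n
    by (simp only: power_minus[of u n] cf_neg1_power_mult)
  thus "cf (ev A (- u)) l = cf (ev (Abs_fps (\<lambda>n. (-1) ^ n * A $ n)) u) l"
    by (simp add: cf_ev mult_ac)
qed

lemma ev_cont_u:
  assumes a: "low 1 a" and b: "low 1 b" and ab: "low n (a - b)"
  shows "low n (ev A a - ev A b)"
proof -
  have eq: "ev A a - ev A b = (ev A a - T n A a) - (ev A b - T n A b) + (T n A a - T n A b)"
    by simp
  have h1: "low n (ev A a - T n A a)" by (rule low_mono[OF ev_approx[OF a]]) simp
  have h2: "low n (ev A b - T n A b)" by (rule low_mono[OF ev_approx[OF b]]) simp
  have eq2: "T n A a - T n A b = (\<Sum>i\<le>n. K (A $ i) * (a ^ i - b ^ i))"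
    by (simp add: T_def algebra_simps sum_subtractf)
  have h3: "low n (\<Sum>i\<le>n. K (A $ i) * (a ^ i - b ^ i))"
    by (intro low_sum low_K_mult low_power_diff ab)
  show ?thesis unfolding eq eq2 by (rule low_add[OF low_diff[OF h1 h2] h3])
qed

lemma hom_ev:
  fixes \<phi> :: "S \<Rightarrow> S"
  assumes add: "\<And>x y. \<phi> (x + y) = \<phi> x + \<phi> y"
    and mult: "\<And>x y. \<phi> (x * y) = \<phi> x * \<phi> y"
    and one: "\<phi> 1 = 1" and KK: "\<And>c. \<phi> (K c) = K c"
    and cont: "\<And>n x. low n x \<Longrightarrow> low n (\<phi> x)"
    and u: "low 1 u"
  shows "\<phi> (ev A u) = ev A (\<phi> u)"
proof (rule eq_by_approx)
  fix N
  have zero: "\<phi> 0 = 0" using add[of 0 0] by simp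
  have diff: "\<phi> (x - y) = \<phi> x - \<phi> y" for x y
    using add[of "x - y" y] by (simp add: algebra_simps)
  have sum: "\<phi> (sum f I) = (\<Sum>i\<in>I. \<phi> (f i))" for f :: "nat \<Rightarrow> S" and I
    by (induction I rule: infinite_finite_induct) (auto simp: zero add)
  have pow: "\<phi> (x ^ n) = \<phi> x ^ n" for x n
    by (induction n) (auto simp: one mult)
  have TT: "\<phi> (T N A u) = T N A (\<phi> u)"
    by (simp add: T_def sum mult KK pow)
  have u': "low 1 (\<phi> u)" by (rule cont[OF u])
  have "low (Suc N) (\<phi> (ev A u) - T N A (\<phi> u))"
    using cont[OF ev_approx[OF u, of N A]] by (simp add: diff TT)
  thus "\<exists>a. low (Suc N) (\<phi> (ev A u) - a) \<and> low (Suc N) (ev A (\<phi> u) - a)"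
    using ev_approx[OF u'] by blast
qed

lemma ev_compose:
  assumes v: "low 1 v" and B0: "B $ 0 = 0"
  shows "ev A (ev B v) = ev (A oo B) v"
proof (rule eq_by_approx)
  fix N
  let ?a = "ev (\<Sum>n\<le>N. fps_const (A $ n) * B ^ n) v"
  have w: "low 1 (ev B v)" by (subst low_ev[OF v]) (rule B0)
  have "T N A (ev B v) = ?a"
    by (simp add: T_def ev_sum ev_const_mult ev_power[OF v])
  hence 1: "low (Suc N) (ev A (ev B v) - ?a)" using ev_approx[OF w, of N A] by simp
  have 2: "low (Suc N) (ev (A oo B) v - ?a)"
  proof (rule ev_cont_A)
    fix i assume i: "i \<le> N"
    have "(A oo B) $ i = (\<Sum>n\<in>{0..i}. A $ n * (B ^ n $ i))" by (rule fps_compose_nth)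
    also have "\<dots> = (\<Sum>n\<le>N. A $ n * (B ^ n $ i))"
    proof (rule sum.mono_neutral_left)
      show "\<forall>n\<in>{..N} - {0..i}. A $ n * (B ^ n $ i) = 0"
        using startsby_zero_power_prefix[OF B0] by auto
    qed (use i in auto)
    also have "\<dots> = (\<Sum>n\<le>N. fps_const (A $ n) * B ^ n) $ i"
      by (simp add: fps_sum_nth)
    finally show "(A oo B) $ i = (\<Sum>n\<le>N. fps_const (A $ n) * B ^ n) $ i" .
  qed
  show "\<exists>a. low (Suc N) (ev A (ev B v) - a) \<and> low (Suc N) (ev (A oo B) v - a)"
    using 1 2 by blast
qed

definition ser :: "(nat \<Rightarrow> S) \<Rightarrow> S" where
  "ser F = Ab (sf_series (\<lambda>k. cf (F k)))"

lemma cf_ser: "cf (ser F) l = (\<Sum>k\<in>{1..sf_deg l}. cf (F k) l)"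
  by (simp add: ser_def sf_series_def Ab_inverse)

lemma cf_ser_ext:
  assumes "\<And>k. low k (F k)" "sf_deg l \<le> N"
  shows "cf (ser F) l = (\<Sum>k\<in>{1..N}. cf (F k) l)"
proof -
  have "(\<Sum>k\<in>{1..N}. cf (F k) l) = (\<Sum>k\<in>{1..sf_deg l}. cf (F k) l)"
  proof (rule sum.mono_neutral_right)
    show "\<forall>i\<in>{1..N} - {1..sf_deg l}. cf (F i) l = 0"
      using assms by (auto intro!: lowD[of _ "F _"])
  qed (use assms in auto)
  thus ?thesis by (simp add: cf_ser)
qed

lemma ser_approx: assumes "\<And>k. low k (F k)" shows "low (Suc N) (ser F - (\<Sum>k\<in>{1..N}. F k))"
proof (rule lowI)
  fix l assume "sf_deg l < Suc N"
  thus "cf (ser F - (\<Sum>k\<in>{1..N}. F k)) l = 0" using cf_ser_ext[OF assms, of l N] by simp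
qed

lemma hom_ser:
  fixes \<phi> :: "S \<Rightarrow> S"
  assumes add: "\<And>x y. \<phi> (x + y) = \<phi> x + \<phi> y"
    and cont: "\<And>n x. low n x \<Longrightarrow> low n (\<phi> x)"
    and F: "\<And>k. low k (F k)"
  shows "\<phi> (ser F) = ser (\<lambda>k. \<phi> (F k))"
proof (rule eq_by_approx)
  fix N
  have zero: "\<phi> 0 = 0" using add[of 0 0] by simp
  have diff: "\<phi> (x - y) = \<phi> x - \<phi> y" for x y
    using add[of "x - y" y] by (simp add: algebra_simps)
  have sum: "\<phi> (sum f I) = (\<Sum>i\<in>I. \<phi> (f i))" for f :: "nat \<Rightarrow> S" and I
    by (induction I rule: infinite_finite_induct) (auto simp: zero add)
  have "low (Suc N) (\<phi> (ser F) - (\<Sum>k\<in>{1..N}. \<phi> (F k)))"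
    using cont[OF ser_approx[OF F, of N]] by (simp add: diff sum)
  moreover have "low (Suc N) (ser (\<lambda>k. \<phi> (F k)) - (\<Sum>k\<in>{1..N}. \<phi> (F k)))"
    by (rule ser_approx) (rule cont[OF F])
  ultimately show "\<exists>a. low (Suc N) (\<phi> (ser F) - a) \<and> low (Suc N) (ser (\<lambda>k. \<phi> (F k)) - a)"
    by blast
qed

lemma ser_cong: "(\<And>k. 1 \<le> k \<Longrightarrow> F k = G k) \<Longrightarrow> ser F = ser G"
  by (rule cf_eqI) (simp add: cf_ser)

lemma low_ser: assumes "\<And>k. 1 \<le> k \<Longrightarrow> low n (F k)" shows "low n (ser F)"
proof (rule lowI)
  fix l assume "sf_deg l < n"
  thus "cf (ser F) l = 0" unfolding cf_ser by (intro sum.neutral) (auto intro: lowD[OF assms])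
qed

lemma low1_ser: "low 1 (ser F)"
  by (rule lowI) (simp add: cf_ser)

lemma ser_add: "ser (\<lambda>k. F k + G k) = ser F + ser G"
  by (rule cf_eqI) (simp add: cf_ser sum.distrib)

lemma ser_uminus: "ser (\<lambda>k. - F k) = - ser F"
  by (rule cf_eqI) (simp add: cf_ser sum_negf)

lemma ser_K_mult: "ser (\<lambda>k. K c * F k) = K c * ser F"
  by (rule cf_eqI) (simp add: cf_ser sum_distrib_left)


unbundle fps_syntax

section \<open>The plethysm p_k o -\<close>

definition scl :: "nat \<Rightarrow> nat multiset \<Rightarrow> nat multiset" where
  "scl k l = image_mset (\<lambda>i. k * i + k - 1) l"

lemma scl_empty[simp]: "scl k {#} = {#}" by (simp add: scl_def)
lemma scl_plus[simp]: "scl k (a + b) = scl k a + scl k b" by (simp add: scl_def)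
lemma scl_eq_empty[simp]: "scl k l = {#} \<longleftrightarrow> l = {#}" by (simp add: scl_def)
lemma size_scl[simp]: "size (scl k l) = size l" by (simp add: scl_def)
lemma scl_1[simp]: "scl 1 l = l" by (simp add: scl_def)

lemma sf_deg_scl: "1 \<le> k \<Longrightarrow> sf_deg (scl k l) = k * sf_deg l"
  by (induction l) (auto simp: scl_def algebra_simps)

lemma nat_aux1: "(1::nat) \<le> j \<Longrightarrow> 1 \<le> k \<Longrightarrow> j * (k * i + k - Suc 0) + j - Suc 0 = j * k * i + j * k - Suc 0"
  by (cases j; cases k) (auto simp: algebra_simps)
lemma nat_aux2: assumes "(1::nat) \<le> q" shows "k * (q - 1) + k = k * q"
  using assms by (cases q) (auto simp: algebra_simps)
lemma nat_aux4: "(1::nat) \<le> k \<Longrightarrow> Suc (k * i + k - Suc 0) = k * Suc i"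
  by (cases k) auto
lemma nat_aux3: "(1::nat) \<le> k \<Longrightarrow> Suc (k * i + k - Suc 0) div k - Suc 0 = i"
  by (simp add: nat_aux4)

lemma scl_scl: "1 \<le> j \<Longrightarrow> 1 \<le> k \<Longrightarrow> scl j (scl k l) = scl (j * k) l"
  by (simp add: scl_def image_mset.compositionality comp_def nat_aux1)

lemma scl_inv: "1 \<le> k \<Longrightarrow> image_mset (\<lambda>i. Suc i div k - 1) (scl k l) = l"
  by (simp add: scl_def image_mset.compositionality comp_def nat_aux3)

lemma scl_inj: "1 \<le> k \<Longrightarrow> scl k a = scl k b \<Longrightarrow> a = b"
  by (metis scl_inv)

lemma scl_range:
  assumes k: "1 \<le> k" and d: "\<forall>i\<in>#l. k dvd Suc i"
  shows "l = scl k (image_mset (\<lambda>i. Suc i div k - 1) l)"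
proof -
  have "k * (Suc i div k - 1) + k - 1 = i" if "i \<in># l" for i
  proof -
    have "k dvd Suc i" using d that by simp
    then obtain q where q: "Suc i = k * q" by (rule dvdE)
    hence q1: "1 \<le> q" by (cases q) auto
    hence "Suc i div k = q" using q k by simp
    moreover have "k * (q - 1) + k = k * q" by (rule nat_aux2[OF q1])
    ultimately show ?thesis using q by simp
  qed
  hence "image_mset (\<lambda>i. k * (Suc i div k - 1) + k - 1) l = image_mset id l"
    by (intro image_mset_cong) simp
  thus ?thesis by (simp add: scl_def image_mset.compositionality comp_def)
qed

lemma scl_dvd: "1 \<le> k \<Longrightarrow> \<forall>i\<in>#scl k l. k dvd Suc i"
  by (auto simp: scl_def nat_aux4)

definition P :: "nat \<Rightarrow> S \<Rightarrow> S" where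
  "P k x = Ab (pleth_pk k (cf x))"

lemma cf_P: "cf (P k x) l = pleth_pk k (cf x) l"
  by (simp add: P_def Ab_inverse)

lemma cf_P_scl: "1 \<le> k \<Longrightarrow> cf (P k x) (scl k l) = cf x l"
  using scl_inv[of k l] scl_dvd[of k l] by (simp add: cf_P pleth_pk_def)

lemma cf_P_out:
  assumes k: "1 \<le> k" and H: "\<And>l'. l \<noteq> scl k l'"
  shows "cf (P k x) l = 0"
proof -
  have "\<not> (\<forall>i\<in>#l. k dvd Suc i)"
  proof
    assume "\<forall>i\<in>#l. k dvd Suc i"
    hence "l = scl k (image_mset (\<lambda>i. Suc i div k - 1) l)" by (rule scl_range[OF k])
    thus False by (rule notE[OF H])
  qed
  thus ?thesis by (auto simp: cf_P pleth_pk_def)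
qed

lemma cf_P_cases:
  assumes "1 \<le> k"
  obtains l' where "l = scl k l'" "\<And>x. cf (P k x) l = cf x l'"
  | "\<And>l'. l \<noteq> scl k l'" "\<And>x. cf (P k x) l = 0"
proof (cases "\<exists>l'. l = scl k l'")
  case True
  then obtain l' where l': "l = scl k l'" by blast
  show thesis
  proof (rule that(1)[OF l'])
    fix x show "cf (P k x) l = cf x l'" unfolding l' by (rule cf_P_scl[OF assms])
  qed
next
  case False
  hence H: "\<And>l'. l \<noteq> scl k l'" by blast
  show thesis
  proof (rule that(2)[OF H])
    fix x show "cf (P k x) l = 0" by (rule cf_P_out[OF assms H])
  qed
qed

lemma P_add: "P k (x + y) = P k x + P k y"
  by (rule cf_eqI) (simp add: cf_P pleth_pk_def)
lemma P_uminus: "P k (- x) = - P k x"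
  by (rule cf_eqI) (simp add: cf_P pleth_pk_def)
lemma P_diff: "P k (x - y) = P k x - P k y"
  by (rule cf_eqI) (simp add: cf_P pleth_pk_def)
lemma P_K_mult: "P k (K c * x) = K c * P k x"
  by (rule cf_eqI) (simp add: cf_P pleth_pk_def)

lemma P_one: assumes k: "1 \<le> k" shows "P k 1 = 1"
proof (rule cf_eqI)
  fix l show "cf (P k 1) l = cf 1 l"
  proof (cases rule: cf_P_cases[OF k, of l])
    case (1 l') thus ?thesis by (cases "l' = {#}") auto
  next
    case 2
    hence "l \<noteq> {#}" using cf_P_scl[OF k, of 1 "{#}"] by auto
    thus ?thesis using 2 by simp
  qed
qed

lemma P_K: "1 \<le> k \<Longrightarrow> P k (K c) = K c"
  using P_K_mult[of k c 1] by (simp add: P_one)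

lemma splits_scl:
  assumes k: "1 \<le> k"
  shows "splits (scl k l) = (\<lambda>(a,b). (scl k a, scl k b)) ` splits l"
proof
  show "splits (scl k l) \<subseteq> (\<lambda>(a,b). (scl k a, scl k b)) ` splits l"
  proof
    fix p assume "p \<in> splits (scl k l)"
    then obtain c d where p: "p = (c, d)" "c + d = scl k l" by (auto simp: splits_def)
    have h: "image_mset (\<lambda>i. k * i + k - 1) l = c + d" using p by (simp add: scl_def)
    obtain c' d' where cd: "l = c' + d'" "c = scl k c'" "d = scl k d'"
      using image_mset_eq_plusD[OF h] by (auto simp: scl_def)
    have "(c', d') \<in> splits l" using cd by (simp add: splits_def)
    moreover have "p = (\<lambda>(a,b). (scl k a, scl k b)) (c', d')" using cd p by simp
    ultimately show "p \<in> (\<lambda>(a,b). (scl k a, scl k b)) ` splits l" by (rule rev_image_eqI)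
  qed
next
  show "(\<lambda>(a,b). (scl k a, scl k b)) ` splits l \<subseteq> splits (scl k l)"
  proof
    fix p assume "p \<in> (\<lambda>(a,b). (scl k a, scl k b)) ` splits l"
    then obtain a b where ab: "a + b = l" "p = (scl k a, scl k b)" by (auto simp: splits_def)
    hence "scl k l = scl k a + scl k b" by (metis scl_plus)
    thus "p \<in> splits (scl k l)" using ab by (simp add: splits_def)
  qed
qed

lemma P_mult: assumes k: "1 \<le> k" shows "P k (x * y) = P k x * P k y"
proof (rule cf_eqI)
  fix l
  show "cf (P k (x * y)) l = cf (P k x * P k y) l"
  proof (cases rule: cf_P_cases[OF k, of l])
    case (1 l')
    have inj: "inj_on (\<lambda>(a,b). (scl k a, scl k b)) (splits l')"
      by (auto simp: inj_on_def dest: scl_inj[OF k])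
    have "cf (P k x * P k y) l = (\<Sum>(c,d)\<in>splits (scl k l'). cf (P k x) c * cf (P k y) d)"
      using 1 by (simp add: cf_mult)
    also have "\<dots> = (\<Sum>(a,b)\<in>splits l'. cf x a * cf y b)"
      unfolding splits_scl[OF k] sum.reindex[OF inj]
      by (intro sum.cong) (auto simp: cf_P_scl[OF k])
    also have "\<dots> = cf (P k (x * y)) l" using 1 by (simp add: cf_mult)
    finally show ?thesis by simp
  next
    case 2
    have "cf (P k x * P k y) l = (\<Sum>(c,d)\<in>splits l. 0)"
      unfolding cf_mult
    proof (intro sum.cong refl)
      fix p assume "p \<in> splits l"
      then obtain c d where p: "p = (c, d)" "c + d = l" by (auto simp: splits_def)
      show "(case p of (c, d) \<Rightarrow> cf (P k x) c * cf (P k y) d) = (case p of (c, d) \<Rightarrow> 0)"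
      proof (cases rule: cf_P_cases[OF k, of c])
        case (1 c')
        note c = this
        show ?thesis
        proof (cases rule: cf_P_cases[OF k, of d])
          case (1 d')
          hence "l = scl k (c' + d')" using c p by simp
          thus ?thesis using 2 by blast
        qed (use p in auto)
      qed (use p in auto)
    qed
    thus ?thesis using 2 by simp
  qed
qed


unbundle fps_syntax

lemma low_P: assumes k: "1 \<le> k" and x: "low n x" shows "low (k * n) (P k x)"
proof (rule lowI)
  fix l assume l: "sf_deg l < k * n"
  show "cf (P k x) l = 0"
  proof (cases rule: cf_P_cases[OF k, of l])
    case (1 l')
    hence "sf_deg l' < n" using l k by (simp add: sf_deg_scl)
    thus ?thesis using 1 x by (simp add: lowD)
  qed simp
qed

lemma low_P': "1 \<le> k \<Longrightarrow> low n x \<Longrightarrow> low n (P k x)"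
  by (rule low_mono[OF low_P]) auto

lemma P_P: assumes j: "1 \<le> j" and k: "1 \<le> k" shows "P j (P k x) = P (j * k) x"
proof (rule cf_eqI)
  fix l
  have jk: "1 \<le> j * k" using j k by simp
  show "cf (P j (P k x)) l = cf (P (j * k) x) l"
  proof (cases rule: cf_P_cases[OF jk, of l])
    case (1 l')
    hence "l = scl j (scl k l')" by (simp add: scl_scl[OF j k])
    thus ?thesis using 1 by (simp add: cf_P_scl[OF j] cf_P_scl[OF k])
  next
    case 2
    show ?thesis
    proof (cases rule: cf_P_cases[OF j, of l])
      case (1 m)
      have "cf (P k x) m = 0"
      proof (cases rule: cf_P_cases[OF k, of m])
        case (1 l'')
        hence "l = scl (j * k) l''" using \<open>l = scl j m\<close> by (simp add: scl_scl[OF j k])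
        thus ?thesis using 2 by blast
      qed simp
      thus ?thesis using 1 2 by simp
    qed (use 2 in simp)
  qed
qed

lemma P_1: "P 1 x = x"
  by (rule cf_eqI) (metis cf_P_scl order_refl scl_1)

section \<open>Plethystic monomials and composition\<close>

definition PM :: "nat multiset \<Rightarrow> S \<Rightarrow> S" where
  "PM m f = prod_mset (image_mset (\<lambda>i. P (Suc i) f) m)"

lemma cf_prod_list: "cf (prod_list (map G xs)) = foldr sf_mult (map (\<lambda>i. cf (G i)) xs) sf_one"
  by (induction xs) (auto simp: cf_one cf_mult')

lemma cf_PM: "cf (PM m f) = pleth_mono m (cf f)"
proof -
  have "pleth_mono m (cf f) = foldr sf_mult (map (\<lambda>i. cf (P (Suc i) f)) (sorted_list_of_multiset m)) sf_one"
    unfolding pleth_mono_def sf_prod_list_def by (simp add: cf_P[abs_def])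
  also have "\<dots> = cf (prod_list (map (\<lambda>i. P (Suc i) f) (sorted_list_of_multiset m)))"
    by (simp add: cf_prod_list)
  also have "prod_list (map (\<lambda>i. P (Suc i) f) (sorted_list_of_multiset m)) = PM m f"
    unfolding PM_def
    by (metis mset_map mset_sorted_list_of_multiset prod_mset_prod_list)
  finally show ?thesis by simp
qed

lemma PM_empty[simp]: "PM {#} f = 1" by (simp add: PM_def)
lemma PM_add_mset: "PM (add_mset i m) f = P (Suc i) f * PM m f" by (simp add: PM_def)
lemma PM_plus: "PM (a + b) f = PM a f * PM b f" by (simp add: PM_def)
lemma PM_single: "PM {#i#} f = P (Suc i) f" by (simp add: PM_def)

lemma low_PM: "low 1 f \<Longrightarrow> low (sf_deg m) (PM m f)"
proof (induction m)
  case empty thus ?case by simp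
next
  case (add i m)
  have "low (Suc i * 1) (P (Suc i) f)" by (rule low_P) (use add in auto)
  hence "low (Suc i + sf_deg m) (P (Suc i) f * PM m f)"
    using add by (intro low_mult) auto
  thus ?case by (simp add: PM_add_mset)
qed

definition plc :: "S \<Rightarrow> S \<Rightarrow> S" where
  "plc g f = Ab (sf_comp (cf g) (cf f))"

lemma cf_plc: "cf (plc g f) l = (\<Sum>m\<in>{m. sf_deg m \<le> sf_deg l}. cf g m * cf (PM m f) l)"
  by (simp add: plc_def Ab_inverse sf_comp_def cf_PM)

lemma cf_plc_ext:
  assumes f: "low 1 f" and M: "finite M" "{m. sf_deg m \<le> sf_deg l} \<subseteq> M"
  shows "cf (plc g f) l = (\<Sum>m\<in>M. cf g m * cf (PM m f) l)"
  unfolding cf_plc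
proof (rule sum.mono_neutral_left[OF M(1) M(2)])
  show "\<forall>m\<in>M - {m. sf_deg m \<le> sf_deg l}. cf g m * cf (PM m f) l = 0"
    using lowD[OF low_PM[OF f]] by auto
qed

lemma plc_add: "plc (g + h) f = plc g f + plc h f"
  by (rule cf_eqI) (simp add: cf_plc algebra_simps sum.distrib)
lemma plc_K_mult: "plc (K c * g) f = K c * plc g f"
  by (rule cf_eqI) (simp add: cf_plc sum_distrib_left mult.assoc)
lemma plc_uminus: "plc (- g) f = - plc g f"
  by (rule cf_eqI) (simp add: cf_plc sum_negf)
lemma plc_diff: "plc (g - h) f = plc g f - plc h f"
  by (rule cf_eqI) (simp add: cf_plc algebra_simps sum_subtractf)

lemma plc_one: "plc 1 f = 1"
proof (rule cf_eqI)
  fix l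
  have "cf (plc 1 f) l = (\<Sum>m\<in>{m. sf_deg m \<le> sf_deg l}. if m = {#} then cf (PM m f) l else 0)"
    unfolding cf_plc by (intro sum.cong) auto
  also have "\<dots> = cf 1 l" by (subst sum.delta) (auto simp: finite_deg_le)
  finally show "cf (plc 1 f) l = cf 1 l" .
qed

lemma plc_K: "plc (K c) f = K c"
  using plc_K_mult[of c 1 f] by (simp add: plc_one)

lemma plc_low: "low n g \<Longrightarrow> low n (plc g f)"
  by (rule lowI) (auto simp: cf_plc lowD intro!: sum.neutral)

lemma cf_pvar: "cf (Ab (pvar k)) m = (if m = {#k - 1#} then 1 else 0)"
  by (simp add: Ab_inverse pvar_def)

lemma plc_pvar:
  assumes k: "1 \<le> k" and f: "low 1 f"
  shows "plc (Ab (pvar k)) f = P k f"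
proof (rule cf_eqI)
  fix l
  let ?M = "insert {#k - 1#} {m. sf_deg m \<le> sf_deg l}"
  have "cf (plc (Ab (pvar k)) f) l = (\<Sum>m\<in>?M. cf (Ab (pvar k)) m * cf (PM m f) l)"
    by (rule cf_plc_ext[OF f]) (auto simp: finite_deg_le)
  also have "\<dots> = (\<Sum>m\<in>?M. if m = {#k - 1#} then cf (PM m f) l else 0)"
    by (intro sum.cong) (auto simp: cf_pvar)
  also have "\<dots> = cf (PM {#k - 1#} f) l" by (subst sum.delta) (auto simp: finite_deg_le)
  also have "\<dots> = cf (P k f) l" using k by (simp add: PM_single)
  finally show "cf (plc (Ab (pvar k)) f) l = cf (P k f) l" .
qed


unbundle fps_syntax

lemma plc_mult:
  assumes f: "low 1 f"
  shows "plc (g * h) f = plc g f * plc h f"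
proof (rule cf_eqI)
  fix l
  define d where "d = sf_deg l"
  define M where "M = {m. sf_deg m \<le> d}"
  have finM: "finite M" by (simp add: M_def finite_deg_le)
  define Q where "Q a = cf (PM a f)" for a
  define G where "G p = cf g (fst p) * cf h (snd p) * Q (fst p + snd p) l" for p
  have QPM: "Q (a + b) l = (\<Sum>q\<in>splits l. Q a (fst q) * Q b (snd q))" for a b
    by (simp add: Q_def PM_plus cf_mult split_beta)
  have Qlow: "d < sf_deg m \<Longrightarrow> Q m l = 0" for m
    unfolding Q_def d_def by (rule lowD[OF low_PM[OF f]])
  have L: "cf (plc (g * h) f) l = (\<Sum>p\<in>M \<times> M. G p)"
  proof -
    have "cf (plc (g * h) f) l = (\<Sum>m\<in>M. \<Sum>p\<in>splits m. cf g (fst p) * cf h (snd p) * Q m l)"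
      by (simp add: cf_plc M_def d_def cf_mult sum_distrib_right Q_def split_beta)
    also have "\<dots> = (\<Sum>m\<in>M. \<Sum>p\<in>splits m. G p)"
      by (intro sum.cong refl) (auto simp: splits_def G_def)
    also have "\<dots> = (\<Sum>(m,p)\<in>Sigma M splits. G p)"
      by (subst sum.Sigma) (auto simp: finM)
    also have "\<dots> = (\<Sum>p\<in>{p. sf_deg (fst p + snd p) \<le> d}. G p)"
      by (rule sum.reindex_bij_witness[where i = "\<lambda>p. (fst p + snd p, p)" and j = snd])
         (auto simp: M_def splits_def)
    also have "\<dots> = (\<Sum>p\<in>M \<times> M. G p)"
    proof (rule sum.mono_neutral_left)
      show "finite (M \<times> M)" using finM by simp
      show "{p. sf_deg (fst p + snd p) \<le> d} \<subseteq> M \<times> M" by (auto simp: M_def)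
      show "\<forall>p\<in>M \<times> M - {p. sf_deg (fst p + snd p) \<le> d}. G p = 0"
        by (auto simp: G_def Qlow)
    qed
    finally show ?thesis .
  qed
  have R: "cf (plc g f * plc h f) l = (\<Sum>p\<in>M \<times> M. G p)"
  proof -
    have "cf (plc g f * plc h f) l = (\<Sum>q\<in>splits l. cf (plc g f) (fst q) * cf (plc h f) (snd q))"
      by (simp add: cf_mult split_beta)
    also have "\<dots> = (\<Sum>q\<in>splits l. \<Sum>p\<in>M \<times> M. cf g (fst p) * cf h (snd p) * (Q (fst p) (fst q) * Q (snd p) (snd q)))"
    proof (intro sum.cong refl)
      fix q assume "q \<in> splits l"
      hence dx: "sf_deg (fst q) \<le> d" "sf_deg (snd q) \<le> d"
        by (auto simp: splits_def d_def)
      have 1: "cf (plc g f) (fst q) = (\<Sum>a\<in>M. cf g a * Q a (fst q))"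
        unfolding Q_def by (rule cf_plc_ext[OF f finM]) (use dx in \<open>auto simp: M_def\<close>)
      have 2: "cf (plc h f) (snd q) = (\<Sum>b\<in>M. cf h b * Q b (snd q))"
        unfolding Q_def by (rule cf_plc_ext[OF f finM]) (use dx in \<open>auto simp: M_def\<close>)
      show "cf (plc g f) (fst q) * cf (plc h f) (snd q) =
            (\<Sum>p\<in>M \<times> M. cf g (fst p) * cf h (snd p) * (Q (fst p) (fst q) * Q (snd p) (snd q)))"
        unfolding 1 2 sum_product sum.cartesian_product
        by (intro sum.cong refl) (auto simp: mult_ac)
    qed
    also have "\<dots> = (\<Sum>p\<in>M \<times> M. \<Sum>q\<in>splits l. cf g (fst p) * cf h (snd p) * (Q (fst p) (fst q) * Q (snd p) (snd q)))"
      by (rule sum.swap)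
    also have "\<dots> = (\<Sum>p\<in>M \<times> M. G p)"
      by (intro sum.cong refl) (simp add: G_def QPM sum_distrib_left)
    finally show ?thesis .
  qed
  show "cf (plc (g * h) f) l = cf (plc g f * plc h f) l" using L R by simp
qed

lemma plc_ev:
  assumes f: "low 1 f" and h: "low 1 h"
  shows "plc (ev A h) f = ev A (plc h f)"
  by (rule hom_ev[where \<phi> = "\<lambda>g. plc g f"])
     (use h in \<open>auto simp: plc_add plc_mult[OF f] plc_one plc_K plc_low\<close>)

lemma plc_ser:
  assumes "\<And>k. low k (F k)"
  shows "plc (ser F) f = ser (\<lambda>k. plc (F k) f)"
  by (rule hom_ser[where \<phi> = "\<lambda>g. plc g f"]) (auto simp: plc_add plc_low assms)

lemma P_ev:
  assumes k: "1 \<le> k" and u: "low 1 u"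
  shows "P k (ev A u) = ev A (P k u)"
  by (rule hom_ev[where \<phi> = "P k"])
     (use u in \<open>auto simp: P_add P_mult[OF k] P_one[OF k] P_K[OF k] low_P'[OF k]\<close>)

lemma P_ser:
  assumes k: "1 \<le> k" and F: "\<And>j. low j (F j)"
  shows "P k (ser F) = ser (\<lambda>j. P k (F j))"
  by (rule hom_ser[where \<phi> = "P k"]) (auto simp: P_add low_P'[OF k] F)

section \<open>The sign twist f(-p)\<close>

definition neg :: "S \<Rightarrow> S" where
  "neg x = Ab (\<lambda>l. (-1) ^ size l * cf x l)"

lemma cf_neg: "cf (neg x) l = (-1) ^ size l * cf x l"
  by (simp add: neg_def Ab_inverse)

lemma neg_add: "neg (x + y) = neg x + neg y"
  by (rule cf_eqI) (simp add: cf_neg algebra_simps)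
lemma neg_uminus: "neg (- x) = - neg x"
  by (rule cf_eqI) (simp add: cf_neg)
lemma neg_diff: "neg (x - y) = neg x - neg y"
  by (rule cf_eqI) (simp add: cf_neg algebra_simps)
lemma neg_neg: "neg (neg x) = x"
  by (rule cf_eqI) (simp add: cf_neg flip: power_add mult_2)
lemma neg_mult: "neg (x * y) = neg x * neg y"
proof (rule cf_eqI)
  fix l
  show "cf (neg (x * y)) l = cf (neg x * neg y) l"
    unfolding cf_neg cf_mult sum_distrib_left
    by (intro sum.cong refl) (auto simp: splits_def power_add mult_ac)
qed
lemma neg_one: "neg 1 = 1"
  by (rule cf_eqI) (simp add: cf_neg cf_one sf_one_def)
lemma neg_K: "neg (K c) = K c"
  by (rule cf_eqI) (simp add: cf_neg cf_K)
lemma neg_low: "low n x \<Longrightarrow> low n (neg x)"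
  by (auto simp: low_def cf_neg)

lemma neg_P: assumes k: "1 \<le> k" shows "neg (P k x) = P k (neg x)"
proof (rule cf_eqI)
  fix l show "cf (neg (P k x)) l = cf (P k (neg x)) l"
    by (cases rule: cf_P_cases[OF k, of l]) (auto simp: cf_neg)
qed

lemma neg_pvar: "neg (Ab (pvar k)) = - Ab (pvar k)"
  by (rule cf_eqI) (simp add: cf_neg cf_pvar)

lemma neg_ev: "low 1 u \<Longrightarrow> neg (ev A u) = ev A (neg u)"
  by (rule hom_ev[where \<phi> = neg]) (auto simp: neg_add neg_mult neg_one neg_K neg_low)

lemma neg_ser: "neg (ser F) = ser (\<lambda>k. neg (F k))"
  by (rule cf_eqI) (simp add: cf_neg cf_ser sum_distrib_left)

lemma susp_Ab: "Ab (susp f) = - neg (Ab f)"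
  by (rule cf_eqI) (simp add: cf_neg susp_def Ab_inverse)

section \<open>Derivative in p_1\<close>

definition Dp :: "S \<Rightarrow> S" where
  "Dp x = Ab (dp1 (cf x))"

lemma cf_Dp: "cf (Dp x) l = of_nat (count l 0 + 1) * cf x (add_mset 0 l)"
  by (simp add: Dp_def Ab_inverse dp1_def)

lemma Dp_add: "Dp (x + y) = Dp x + Dp y"
  by (rule cf_eqI) (simp add: cf_Dp algebra_simps)
lemma Dp_diff: "Dp (x - y) = Dp x - Dp y"
  by (rule cf_eqI) (simp add: cf_Dp algebra_simps)
lemma Dp_uminus: "Dp (- x) = - Dp x"
  by (rule cf_eqI) (simp add: cf_Dp)
lemma Dp_K_mult: "Dp (K c * x) = K c * Dp x"
  by (rule cf_eqI) (simp add: cf_Dp)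
lemma Dp_one: "Dp 1 = 0"
  by (rule cf_eqI) (simp add: cf_Dp)
lemma Dp_sum: "Dp (sum f A) = (\<Sum>i\<in>A. Dp (f i))"
  by (induction A rule: infinite_finite_induct) (auto simp: Dp_add cf_Dp intro: cf_eqI)
lemma Dp_low: "low (Suc n) x \<Longrightarrow> low n (Dp x)"
  by (auto simp: low_def cf_Dp)

lemma Dp_p1: "Dp (Ab (pvar 1)) = 1"
  by (rule cf_eqI) (simp add: cf_Dp cf_pvar cf_one sf_one_def)

lemma Dp_P: assumes k: "2 \<le> k" shows "Dp (P k x) = 0"
proof (rule cf_eqI)
  fix l
  have k1: "1 \<le> k" using k by simp
  have "cf (P k x) (add_mset 0 l) = 0"
  proof (cases rule: cf_P_cases[OF k1, of "add_mset 0 l"])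
    case (1 l')
    hence "0 \<in># scl k l'" by (metis union_single_eq_member add_mset_add_single)
    then obtain i where "k * i + k - 1 = 0" by (auto simp: scl_def)
    thus ?thesis using k by simp
  qed simp
  thus "cf (Dp (P k x)) l = cf 0 l" by (simp add: cf_Dp)
qed

lemma splits_swap: "(\<Sum>q\<in>splits l. F (fst q) (snd q)) = (\<Sum>q\<in>splits l. F (snd q) (fst q))"
  by (rule sum.reindex_bij_witness[where i = "\<lambda>q. (snd q, fst q)" and j = "\<lambda>q. (snd q, fst q)"])
     (auto simp: splits_def add.commute)

lemma splits_add0:
  "(\<Sum>q\<in>splits (add_mset 0 l). of_nat (count (fst q) 0) * F (fst q) (snd q)) =
   (\<Sum>q\<in>splits l. of_nat (count (fst q) 0 + 1) * F (add_mset 0 (fst q)) (snd q))"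
  (is "?L = ?R")
proof -
  let ?S1 = "{q\<in>splits (add_mset 0 l). 0 \<in># fst q}"
  have "?L = (\<Sum>q\<in>?S1. of_nat (count (fst q) 0) * F (fst q) (snd q))"
    by (rule sum.mono_neutral_right) (auto simp: not_in_iff)
  also have "\<dots> = ?R"
  proof (rule sum.reindex_bij_witness[where j = "\<lambda>q. (fst q - {#0#}, snd q)"
          and i = "\<lambda>q. (add_mset 0 (fst q), snd q)"])
    fix q assume q: "q \<in> ?S1"
    then obtain a b where ab: "q = (a, b)" "a + b = add_mset 0 l" "0 \<in># a"
      by (auto simp: splits_def)
    have a: "add_mset 0 (a - {#0#}) = a" using ab(3) by (rule insert_DiffM)
    show "(add_mset 0 (fst (fst q - {#0#}, snd q)), snd (fst q - {#0#}, snd q)) = q"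
      using ab a by simp
    have "b + a - {#0#} = b + (a - {#0#})" by (rule multiset_diff_union_assoc) (use ab(3) in simp)
    hence "(a - {#0#}) + b = l" using ab(2) by (simp add: add.commute)
    thus "(fst q - {#0#}, snd q) \<in> splits l" using ab by (simp add: splits_def)
    have "count a 0 = count (add_mset 0 (a - {#0#})) 0" using a by simp
    hence "count a 0 = count (a - {#0#}) 0 + 1" by simp
    thus "of_nat (count (fst (fst q - {#0#}, snd q)) 0 + 1) *
          F (add_mset 0 (fst (fst q - {#0#}, snd q))) (snd (fst q - {#0#}, snd q)) =
          of_nat (count (fst q) 0) * F (fst q) (snd q)"
      using ab a by simp
  next
    fix q assume q: "q \<in> splits l"
    thus "(fst (add_mset 0 (fst q), snd q) - {#0#}, snd (add_mset 0 (fst q), snd q)) = q" by simp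
    show "(add_mset 0 (fst q), snd q) \<in> ?S1" using q by (auto simp: splits_def)
  qed
  finally show ?thesis .
qed

lemma Dp_mult: "Dp (x * y) = Dp x * y + x * Dp y"
proof (rule cf_eqI)
  fix l
  let ?S = "splits (add_mset 0 l)"
  let ?c = "\<lambda>m. of_nat (count m 0) :: rat"
  have cnt: "q \<in> ?S \<Longrightarrow> ?c (fst q) + ?c (snd q) = of_nat (count l 0 + 1)" for q
    by (auto simp: splits_def simp flip: of_nat_add count_union)
  have A: "cf (Dp x * y) l = (\<Sum>q\<in>splits l. of_nat (count (fst q) 0 + 1) * (cf x (add_mset 0 (fst q)) * cf y (snd q)))"
    by (simp add: cf_mult cf_Dp split_beta mult.assoc)
  have B: "cf (Dp y * x) l = (\<Sum>q\<in>splits l. of_nat (count (fst q) 0 + 1) * (cf y (add_mset 0 (fst q)) * cf x (snd q)))"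
    by (simp add: cf_mult cf_Dp split_beta mult.assoc)
  have "cf (Dp (x * y)) l = (\<Sum>q\<in>?S. of_nat (count l 0 + 1) * (cf x (fst q) * cf y (snd q)))"
    by (simp add: cf_Dp cf_mult sum_distrib_left split_beta)
  also have "\<dots> = (\<Sum>q\<in>?S. (?c (fst q) + ?c (snd q)) * (cf x (fst q) * cf y (snd q)))"
    by (intro sum.cong refl) (simp add: cnt)
  also have "\<dots> = (\<Sum>q\<in>?S. ?c (fst q) * (cf x (fst q) * cf y (snd q))) +
                  (\<Sum>q\<in>?S. ?c (snd q) * (cf x (fst q) * cf y (snd q)))"
    by (simp add: algebra_simps sum.distrib)
  also have "(\<Sum>q\<in>?S. ?c (fst q) * (cf x (fst q) * cf y (snd q))) = cf (Dp x * y) l"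
    unfolding A by (rule splits_add0)
  also have "(\<Sum>q\<in>?S. ?c (snd q) * (cf x (fst q) * cf y (snd q))) =
             (\<Sum>q\<in>?S. ?c (fst q) * (cf y (fst q) * cf x (snd q)))"
    by (subst splits_swap) (simp add: mult.commute)
  also have "\<dots> = cf (Dp y * x) l"
    unfolding B by (rule splits_add0)
  finally show "cf (Dp (x * y)) l = cf (Dp x * y + x * Dp y) l" by (simp add: mult.commute)
qed

lemma Dp_power: "Dp (x ^ Suc n) = K (of_nat (Suc n)) * x ^ n * Dp x"
proof (induction n)
  case 0 thus ?case by (simp add: Dp_mult Dp_one)
next
  case (Suc n)
  have "Dp (x ^ Suc (Suc n)) = Dp x * x ^ Suc n + x * Dp (x ^ Suc n)"
    by (simp add: Dp_mult)
  also have "\<dots> = (1 + K (of_nat (Suc n))) * x ^ Suc n * Dp x"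
    using Suc by (simp add: algebra_simps)
  also have "1 + K (of_nat (Suc n)) = K (of_nat (Suc (Suc n)))"
  proof -
    have "K (of_nat (Suc (Suc n))) = K (1 + of_nat (Suc n))" by simp
    also have "\<dots> = K 1 + K (of_nat (Suc n))" by (rule K_add)
    finally show ?thesis by simp
  qed
  finally show ?case .
qed


lemma alt_Pow: "finite A \<Longrightarrow> (\<Sum>S\<in>Pow A. (-1::rat) ^ card S) = (if A = {} then 1 else 0)"
proof (induction A rule: finite_induct)
  case empty thus ?case by simp
next
  case (insert x F)
  have inj: "inj_on (insert x) (Pow F)"
    using insert(2) by (auto simp: inj_on_def)
  have disj: "Pow F \<inter> insert x ` Pow F = {}" using insert(2) by auto
  have "(\<Sum>S\<in>Pow (insert x F). (-1::rat) ^ card S)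
      = (\<Sum>S\<in>Pow F. (-1::rat) ^ card S) + (\<Sum>S\<in>insert x ` Pow F. (-1::rat) ^ card S)"
    unfolding Pow_insert by (rule sum.union_disjoint) (use insert(1) disj in auto)
  also have "(\<Sum>S\<in>insert x ` Pow F. (-1::rat) ^ card S) = (\<Sum>S\<in>Pow F. (-1::rat) ^ card (insert x S))"
    by (rule sum.reindex[OF inj, unfolded comp_def])
  also have "\<dots> = (\<Sum>S\<in>Pow F. - ((-1::rat) ^ card S))"
  proof (intro sum.cong refl)
    fix S assume "S \<in> Pow F"
    hence "finite S" "x \<notin> S" using insert(1,2) finite_subset by auto
    thus "(-1::rat) ^ card (insert x S) = - ((-1) ^ card S)" by simp
  qed
  finally show ?case by (simp add: sum_negf)
qed

lemma sqf_pf: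
  assumes k: "(k::nat) > 0" and sq: "squarefree k"
  shows "prime_factorization k = mset_set (prime_factors k)"
proof (rule multiset_eqI)
  fix p
  show "count (prime_factorization k) p = count (mset_set (prime_factors k)) p"
  proof (cases "prime p")
    case True
    have le: "multiplicity p k \<le> 1" using sq k True by (simp add: squarefree_factorial_semiring'')
    have pos: "0 < multiplicity p k" if "p \<in># prime_factorization k"
      using that True by (simp add: count_prime_factorization_prime flip: count_greater_zero_iff)
    show ?thesis
      using le True pos by (auto simp: count_prime_factorization_prime count_mset_set' not_in_iff)
  next
    case False thus ?thesis by (auto simp: count_prime_factorization_nonprime count_mset_set')
  qed
qed

lemma pf_prod_set:
  assumes "finite S" "\<forall>p\<in>S. prime (p::nat)"
  shows "prime_factorization (\<Prod>S) = mset_set S"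
proof -
  have "\<Prod>S = prod_mset (mset_set S)" by (simp add: prod_unfold_prod_mset)
  also have "prime_factorization \<dots> = mset_set S"
    by (rule prime_factorization_prod_mset_primes) (use assms in auto)
  finally show ?thesis .
qed

lemma moebius_sum:
  assumes n: "(n::nat) > 0"
  shows "(\<Sum>k\<in>{k. k dvd n}. moebius k) = (if n = 1 then 1 else 0)"
proof -
  let ?D = "{k. k dvd n}" and ?D' = "{k. k dvd n \<and> squarefree k}" and ?P = "prime_factors n"
  have finD: "finite ?D" using n by simp
  have "(\<Sum>k\<in>?D. moebius k) = (\<Sum>k\<in>?D'. (-1) ^ card (prime_factors k))"
  proof -
    have "(\<Sum>k\<in>?D. moebius k) = (\<Sum>k\<in>?D'. moebius k)"
      by (rule sum.mono_neutral_right[OF finD]) (auto simp: moebius_def)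
    thus ?thesis by (simp add: moebius_def)
  qed
  also have "\<dots> = (\<Sum>S\<in>Pow ?P. (-1) ^ card (prime_factors (\<Prod>S)))"
  proof (rule sum.reindex_bij_betw[symmetric])
    show "bij_betw Prod (Pow ?P) ?D'"
    proof (rule bij_betwI')
      fix S T assume "S \<in> Pow ?P" "T \<in> Pow ?P"
      hence "finite S" "finite T" "\<forall>p\<in>S. prime p" "\<forall>p\<in>T. prime p"
        using finite_subset by (auto simp: in_prime_factors_iff) 
      thus "(\<Prod>S = \<Prod>T) = (S = T)"
        by (metis finite_set_mset_mset_set pf_prod_set)
    next
      fix S assume S: "S \<in> Pow ?P"
      hence fS: "finite S" and pS: "\<forall>p\<in>S. prime p"
        using finite_subset by (auto simp: in_prime_factors_iff)
      have pf: "prime_factorization (\<Prod>S) = mset_set S" by (rule pf_prod_set[OF fS pS])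
      have nz: "\<Prod>S \<noteq> 0" using pS fS by (auto simp: prime_gt_0_nat)
      have "mset_set S \<subseteq># mset_set ?P" using S by (intro subset_imp_msubset_mset_set) auto
      also have "\<dots> \<subseteq># prime_factorization n" by (rule mset_set_set_mset_msubset)
      finally have "\<Prod>S dvd n" using nz pf by (intro prime_factorization_subset_imp_dvd) auto
      moreover have "squarefree (\<Prod>S)"
      proof (subst squarefree_factorial_semiring''[OF nz], intro allI impI)
        fix p :: nat assume "prime p"
        hence "multiplicity p (\<Prod>S) = count (mset_set S) p"
          by (simp add: count_prime_factorization_prime flip: pf)
        thus "multiplicity p (\<Prod>S) \<le> 1" by (simp add: count_mset_set')
      qed
      ultimately show "\<Prod>S \<in> ?D'" by simp
    next
      fix k assume k: "k \<in> ?D'"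
      hence k0: "k > 0" using n by (auto intro: Nat.gr0I)
      have eq: "prime_factorization k = mset_set (prime_factors k)" by (rule sqf_pf[OF k0]) (use k in simp)
      have "k = prod_mset (prime_factorization k)" by (rule prod_mset_prime_factorization_nat[symmetric, OF k0])
      also have "\<dots> = prod_mset (mset_set (prime_factors k))" by (rule arg_cong[OF eq])
      also have "\<dots> = \<Prod>(prime_factors k)" by (simp add: prod_unfold_prod_mset)
      finally have "k = \<Prod>(prime_factors k)" .
      moreover have "prime_factors k \<in> Pow ?P" using k n by (auto intro: dvd_prime_factors[THEN subsetD])
      ultimately show "\<exists>S\<in>Pow ?P. k = \<Prod>S" by blast
    qed
  qed
  also have "\<dots> = (\<Sum>S\<in>Pow ?P. (-1) ^ card S)"
  proof (intro sum.cong refl)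
    fix S assume S: "S \<in> Pow ?P"
    hence fS: "finite S" and pS: "\<forall>p\<in>S. prime p"
      using finite_subset by (auto simp: in_prime_factors_iff)
    show "(-1) ^ card (prime_factors (\<Prod>S)) = (-1::rat) ^ card S"
      by (simp add: pf_prod_set[OF fS pS] fS)
  qed
  also have "\<dots> = (if ?P = {} then 1 else 0)" by (rule alt_Pow) simp
  also have "(?P = {}) = (n = 1)" using n by (auto simp: prime_factorization_empty_iff)
  finally show ?thesis .
qed


unbundle fps_syntax

lemma P_Suc0[simp]: "P (Suc 0) x = x"
  using P_1[of x] by simp

lemma low1_iff: "low 1 x \<longleftrightarrow> cf x {#} = 0"
  by (auto simp: low_def)

lemma low_Suc0_iff: "low (Suc 0) x \<longleftrightarrow> cf x {#} = 0"
  by (auto simp: low_def)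

lemma Dp_ev:
  assumes u: "low 1 u"
  shows "Dp (ev A u) = ev (fps_deriv A) u * Dp u"
proof (rule eq_by_approx)
  fix N
  let ?a = "T N (fps_deriv A) u * Dp u"
  have DT: "Dp (T (Suc N) A u) = ?a"
  proof -
    have "Dp (T (Suc N) A u) = (\<Sum>n\<le>Suc N. K (A $ n) * Dp (u ^ n))"
      by (simp only: T_def Dp_sum Dp_K_mult)
    also have "\<dots> = K (A $ 0) * Dp (u ^ 0) + (\<Sum>n\<le>N. K (A $ Suc n) * Dp (u ^ Suc n))"
      by (rule sum.atMost_Suc_shift)
    also have "\<dots> = (\<Sum>n\<le>N. K (A $ Suc n) * (K (of_nat (Suc n)) * u ^ n * Dp u))"
      by (simp add: Dp_one Dp_power del: power_Suc)
    also have "\<dots> = ?a"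
      by (simp add: T_def sum_distrib_left sum_distrib_right K_mult mult_ac)
    finally show ?thesis .
  qed
  have 1: "low (Suc N) (Dp (ev A u) - ?a)"
  proof -
    have "low (Suc N) (Dp (ev A u - T (Suc N) A u))" by (rule Dp_low) (rule ev_approx[OF u])
    thus ?thesis by (simp add: Dp_diff DT)
  qed
  have 2: "low (Suc N) (ev (fps_deriv A) u * Dp u - ?a)"
  proof -
    have "ev (fps_deriv A) u * Dp u - ?a = (ev (fps_deriv A) u - T N (fps_deriv A) u) * Dp u"
      by (simp add: algebra_simps)
    thus ?thesis using low_mult_left[OF ev_approx[OF u]] by simp
  qed
  show "\<exists>a. low (Suc N) (Dp (ev A u) - a) \<and> low (Suc N) (ev (fps_deriv A) u * Dp u - a)"
    using 1 2 by blast
qed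

lemma ser_diff: "ser (\<lambda>k. F k - G k) = ser F - ser G"
  by (rule cf_eqI) (simp add: cf_ser sum_subtractf)

definition W :: "S \<Rightarrow> S" where
  "W y = ser (\<lambda>k. K (1 / of_nat k) * P k y)"

lemma W_terms_low: "low 1 y \<Longrightarrow> low k (K (1 / of_nat k) * P k y)"
proof (cases k)
  case (Suc m)
  assume y: "low 1 y"
  have "low (k * 1) (P k y)" by (rule low_P) (use Suc y in auto)
  thus ?thesis by (simp add: low_K_mult)
qed simp

lemma low_W: "low n y \<Longrightarrow> low n (W y)"
  unfolding W_def by (intro low_ser low_K_mult low_P') auto

lemma W_diff: "W (x - y) = W x - W y"
  by (simp add: W_def P_diff right_diff_distrib ser_diff)

lemma W_uminus: "W (- y) = - W y"
  by (simp add: W_def P_uminus ser_uminus)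

lemma neg_W: "neg (W y) = W (neg y)"
  unfolding W_def neg_ser by (intro ser_cong) (simp add: neg_mult neg_K neg_P)

lemma low1_W: "low 1 (W y)"
  unfolding W_def by (rule low1_ser)

lemma Dp_W:
  assumes y: "low 1 y"
  shows "Dp (W y) = Dp y"
proof (rule eq_by_low)
  fix n
  let ?F = "\<lambda>k. K (1 / of_nat k) * P k y"
  have "low (Suc (Suc n)) (W y - (\<Sum>k\<in>{1..Suc n}. ?F k))"
    unfolding W_def by (rule ser_approx) (rule W_terms_low[OF y])
  hence "low (Suc n) (Dp (W y - (\<Sum>k\<in>{1..Suc n}. ?F k)))" by (rule Dp_low)
  moreover have "Dp (\<Sum>k\<in>{1..Suc n}. ?F k) = Dp y"
  proof -
    have "Dp (\<Sum>k\<in>{1..Suc n}. ?F k) = (\<Sum>k\<in>{1..Suc n}. Dp (?F k))" by (rule Dp_sum)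
    also have "\<dots> = Dp (?F 1) + (\<Sum>k\<in>{Suc 1..Suc n}. Dp (?F k))"
      by (rule sum.atLeast_Suc_atMost) simp
    also have "(\<Sum>k\<in>{Suc 1..Suc n}. Dp (?F k)) = 0"
      by (intro sum.neutral) (auto simp: Dp_K_mult Dp_P)
    also have "Dp (?F 1) = Dp y" by (simp add: P_1)
    finally show ?thesis by simp
  qed
  ultimately have "low (Suc n) (Dp (W y) - Dp y)" by (simp add: Dp_diff)
  thus "low n (Dp (W y) - Dp y)" by (rule low_mono) simp
qed

lemma low_pvar: "low k (Ab (pvar k))"
  by (rule lowI) (auto simp: cf_pvar)

definition sp :: S where
  "sp = ser (\<lambda>k. K (1 / of_nat k) * Ab (pvar k))"

lemma plc_sp: "low 1 y \<Longrightarrow> plc sp y = W y"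
  unfolding sp_def W_def
  by (subst plc_ser) (auto intro!: ser_cong low_K_mult low_pvar simp: plc_K_mult plc_pvar)

lemma mob_ser:
  assumes y: "low 1 y"
  shows "ser (\<lambda>k. K (moebius k / of_nat k) * ser (\<lambda>j. K (1 / of_nat j) * P (k * j) y)) = y"
proof (rule cf_eqI)
  fix l
  define d where "d = sf_deg l"
  show "cf (ser (\<lambda>k. K (moebius k / of_nat k) * ser (\<lambda>j. K (1 / of_nat j) * P (k * j) y))) l = cf y l"
  proof (cases "l = {#}")
    case True
    thus ?thesis using y by (simp add: cf_ser low1_iff low_Suc0_iff)
  next
    case False
    hence d1: "1 \<le> d" by (cases l) (auto simp: d_def)
    define c where "c n = cf (P n y) l" for n
    have cz: "d < n \<Longrightarrow> c n = 0" for n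
    proof -
      assume "d < n"
      hence "1 \<le> n" using d1 by simp
      have "low (n * 1) (P n y)" by (rule low_P) (use \<open>1 \<le> n\<close> y in auto)
      thus "c n = 0" using \<open>d < n\<close> by (simp add: c_def d_def lowD)
    qed
    define f where "f p = moebius (fst p) / (of_nat (fst p) * of_nat (snd p)) * c (fst p * snd p)" for p
    have "cf (ser (\<lambda>k. K (moebius k / of_nat k) * ser (\<lambda>j. K (1 / of_nat j) * P (k * j) y))) l
        = (\<Sum>k\<in>{1..d}. \<Sum>j\<in>{1..d}. f (k, j))"
      by (simp add: cf_ser d_def[symmetric] sum_distrib_left f_def c_def)
    also have "\<dots> = (\<Sum>p\<in>{1..d} \<times> {1..d}. f p)"
      by (simp add: sum.cartesian_product)
    also have "\<dots> = (\<Sum>p\<in>{p\<in>{1..d} \<times> {1..d}. fst p * snd p \<le> d}. f p)"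
    proof (rule sum.mono_neutral_right)
      show "\<forall>p\<in>{1..d} \<times> {1..d} - {p\<in>{1..d} \<times> {1..d}. fst p * snd p \<le> d}. f p = 0"
        by (auto simp: f_def cz not_le)
    qed auto
    also have "\<dots> = (\<Sum>q\<in>Sigma {1..d} (\<lambda>n. {k. k dvd n}). moebius (snd q) / of_nat (fst q) * c (fst q))"
    proof (rule sum.reindex_bij_witness[where j = "\<lambda>p. (fst p * snd p, fst p)"
          and i = "\<lambda>q. (snd q, fst q div snd q)"])
      fix p assume p: "p \<in> {p\<in>{1..d} \<times> {1..d}. fst p * snd p \<le> d}"
      show "(snd (fst p * snd p, fst p), fst (fst p * snd p, fst p) div snd (fst p * snd p, fst p)) = p"
        using p by (cases p) auto
      show "(fst p * snd p, fst p) \<in> Sigma {1..d} (\<lambda>n. {k. k dvd n})"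
        using p by (cases p) auto
      show "moebius (snd (fst p * snd p, fst p)) / of_nat (fst (fst p * snd p, fst p)) *
            c (fst (fst p * snd p, fst p)) = f p"
        by (simp add: f_def)
    next
      fix q assume q: "q \<in> Sigma {1..d} (\<lambda>n. {k. k dvd n})"
      then obtain n k where nk: "q = (n, k)" "1 \<le> n" "n \<le> d" "k dvd n" by auto
      have k1: "1 \<le> k"
      proof (rule ccontr)
        assume "\<not> 1 \<le> k"
        hence "k = 0" by simp
        hence "n = 0" using nk(4) by simp
        thus False using nk(2) by simp
      qed
      have kn: "k * (n div k) = n" using nk(4) by simp
      have "1 \<le> n div k"
      proof (rule ccontr)
        assume "\<not> 1 \<le> n div k"
        hence "n div k = 0" by simp
        hence "n = 0" using kn by (metis mult_0_right)
        thus False using nk(2) by simp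
      qed
      moreover have "n div k \<le> d" using div_le_dividend[of n k] nk(3) by (rule le_trans)
      moreover have "k \<le> d"
      proof -
        have "k \<le> n" by (rule dvd_imp_le[OF nk(4)]) (use nk(2) in simp)
        thus ?thesis using nk(3) by (rule le_trans)
      qed
      ultimately show "(snd q, fst q div snd q) \<in> {p\<in>{1..d} \<times> {1..d}. fst p * snd p \<le> d}"
        using nk k1 kn by auto
      show "(fst (snd q, fst q div snd q) * snd (snd q, fst q div snd q), fst (snd q, fst q div snd q)) = q"
        using nk kn by simp
    qed
    also have "\<dots> = (\<Sum>n\<in>{1..d}. \<Sum>k\<in>{k. k dvd n}. moebius k / of_nat n * c n)"
      by (subst sum.Sigma) (auto simp: split_beta)
    also have "\<dots> = (\<Sum>n\<in>{1..d}. c n / of_nat n * (\<Sum>k\<in>{k. k dvd n}. moebius k))"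
      by (simp add: sum_distrib_left mult_ac)
    also have "\<dots> = (\<Sum>n\<in>{1..d}. if n = 1 then c n else 0)"
      by (intro sum.cong refl) (auto simp: moebius_sum)
    also have "\<dots> = c 1" using d1 by simp
    also have "\<dots> = cf y l" by (simp add: c_def P_1)
    finally show ?thesis .
  qed
qed


unbundle fps_syntax

declare One_nat_def[simp del]

lemma cf_Ab[simp]: "cf (Ab f) = f" by (simp add: Ab_inverse)
lemma Ab_cf[simp]: "Ab (cf x) = x" by (rule cf_inverse)

lemma Ab_sf_add: "Ab (sf_add f g) = Ab f + Ab g" by (rule cf_eqI) (simp add: sf_add_def)
lemma Ab_sf_sub: "Ab (sf_sub f g) = Ab f - Ab g" by (rule cf_eqI) (simp add: sf_sub_def)
lemma Ab_sf_mult: "Ab (sf_mult f g) = Ab f * Ab g" by (rule cf_eqI) (simp add: cf_mult')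
lemma Ab_sf_one: "Ab sf_one = 1" by (rule cf_eqI) (simp add: cf_one)
lemma Ab_sf_smult: "Ab (sf_smult c f) = K c * Ab f" by (rule cf_eqI) (simp add: sf_smult_def)
lemma fps_nth_Abs_eta: "fps_nth (Abs_fps a) = a" by (rule ext) simp
lemma Ab_psubst: "Ab (psubst a h) = ev (Abs_fps a) (Ab h)" by (simp add: ev_def fps_nth_Abs_eta)
lemma Ab_sf_series: "Ab (sf_series F) = ser (\<lambda>k. Ab (F k))" by (simp add: ser_def)
lemma Ab_sf_comp: "Ab (sf_comp g f) = plc (Ab g) (Ab f)" by (simp add: plc_def)
lemma Ab_dp1: "Ab (dp1 f) = Dp (Ab f)" by (simp add: Dp_def)

definition EE :: "rat fps" where "EE = fps_exp 1"
definition Alt :: "rat fps" where "Alt = Abs_fps (\<lambda>n. if n = 0 then 0 else (-1) ^ (n - 1))"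
definition Mf :: "rat fps" where "Mf = Abs_fps (\<lambda>n. if n = 0 then 0 else 1 / of_nat n)"

lemma exp_coeffs: "Abs_fps (\<lambda>n. (1::rat) / fact n) = EE"
  by (rule fps_ext) (simp add: EE_def)

lemma Ab_Comm: "Ab Comm = ev EE sp - 1"
  unfolding Comm_def sf_exp_def
  by (simp add: Ab_sf_sub Ab_sf_one Ab_psubst Ab_sf_series Ab_sf_smult sp_def exp_coeffs)

lemma Ab_Lie: "Ab Lie = ser (\<lambda>k. K (moebius k / of_nat k) * ev Mf (Ab (pvar k)))"
  unfolding Lie_def sf_mlog_def by (simp add: Ab_sf_series Ab_sf_smult Ab_psubst Mf_def)

lemma Ab_P1: "Ab p1_over_1_plus_p1 = ev Alt (Ab (pvar 1))"
  unfolding p1_over_1_plus_p1_def by (simp add: Ab_psubst Alt_def)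

lemma Alt_mult: "Alt * (1 + fps_X) = fps_X"
proof (rule fps_ext)
  fix n
  have "(Alt * (1 + fps_X)) $ n = Alt $ n + (Alt * fps_X) $ n" by (simp add: distrib_left)
  also have "\<dots> = fps_X $ n"
  proof (cases n)
    case 0 thus ?thesis by (simp add: Alt_def)
  next
    case (Suc m)
    thus ?thesis by (cases m) (auto simp: Alt_def)
  qed
  finally show "(Alt * (1 + fps_X)) $ n = fps_X $ n" .
qed

lemma EE_neg: "Abs_fps (\<lambda>n. (-1) ^ n * EE $ n) = fps_exp (-1)"
  by (rule fps_ext) (simp add: EE_def)

lemma EE_inv: "fps_exp (-1) * EE = 1"
  using fps_exp_add_mult[of "-1::rat" 1] by (simp add: EE_def)

lemma Lg: "- Abs_fps (\<lambda>n. (-1) ^ n * Mf $ n) = fps_ln 1"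
proof (rule fps_ext)
  fix n show "(- Abs_fps (\<lambda>n. (-1) ^ n * Mf $ n)) $ n = fps_ln 1 $ n"
    by (cases n) (auto simp: Mf_def fps_ln_nth)
qed

lemma Lg_comp: "fps_ln (1::rat) oo (EE - 1) = fps_X"
  by (simp add: EE_def fps_ln_fps_exp_inv fps_inv_fps_exp_compose)

lemma low_p1: "low 1 (Ab (pvar 1))"
  by (rule low_pvar)

lemma plc_p1: "low 1 y \<Longrightarrow> plc (Ab (pvar 1)) y = y"
  by (simp add: plc_pvar P_1)

lemma cf_ev_EE_empty: "cf (ev EE w) {#} = 1"
  by (simp add: cf_ev_empty EE_def)

lemma low1_EE: "low 1 (ev EE w - 1)"
  by (simp add: low1_iff cf_ev_EE_empty)

lemma plc_Comm: assumes y: "low 1 y" shows "plc (Ab Comm) y = ev EE (W y) - 1"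
proof -
  have "plc (ev EE sp) y = ev EE (plc sp y)" by (rule plc_ev[OF y]) (simp add: sp_def low1_ser)
  thus ?thesis unfolding Ab_Comm by (simp add: plc_diff plc_one plc_sp[OF y])
qed

lemma ev_ln_exp:
  assumes V: "low 1 V"
  shows "ev (fps_ln 1) (ev EE V - 1) = V"
proof -
  have "ev EE V - 1 = ev (EE - 1) V" by (simp add: ev_diff ev_1[OF V])
  also have "ev (fps_ln 1) \<dots> = ev (fps_ln 1 oo (EE - 1)) V"
    by (rule ev_compose[OF V]) (simp add: EE_def)
  also have "\<dots> = V" by (simp add: Lg_comp ev_X[OF V])
  finally show ?thesis .
qed

lemma low1_pvar: "1 \<le> k \<Longrightarrow> low 1 (Ab (pvar k))"
  by (rule low_mono[OF low_pvar])

lemma susp_Lie: "Ab (susp Lie) = ser (\<lambda>k. K (moebius k / of_nat k) * ev (fps_ln 1) (Ab (pvar k)))"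
proof -
  have "Ab (susp Lie) = - ser (\<lambda>k. neg (K (moebius k / of_nat k) * ev Mf (Ab (pvar k))))"
    by (simp add: susp_Ab Ab_Lie neg_ser)
  also have "\<dots> = - ser (\<lambda>k. K (moebius k / of_nat k) * ev (Abs_fps (\<lambda>n. (-1) ^ n * Mf $ n)) (Ab (pvar k)))"
    by (intro arg_cong[where f = uminus] ser_cong)
       (simp add: neg_mult neg_K neg_ev low1_pvar neg_pvar ev_neg_arg)
  also have "\<dots> = ser (\<lambda>k. K (moebius k / of_nat k) * ev (fps_ln 1) (Ab (pvar k)))"
    unfolding Lg[symmetric] ev_uminus mult_minus_right ser_uminus ..
  finally show ?thesis .
qed

lemma plc_susp_Lie:
  assumes Z: "low 1 Z"
  shows "plc (Ab (susp Lie)) Z = ser (\<lambda>k. K (moebius k / of_nat k) * ev (fps_ln 1) (P k Z))"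
proof -
  have lowk: "low k (K (moebius k / of_nat k) * ev (fps_ln 1) (Ab (pvar k)))" for k
  proof (cases "k = 0")
    case False
    thus ?thesis by (intro low_K_mult low_ev_k low_pvar) auto
  qed simp
  show ?thesis
    unfolding susp_Lie plc_ser[OF lowk]
    by (intro ser_cong) (simp add: plc_K_mult plc_ev[OF Z] low1_pvar plc_pvar[OF _ Z])
qed

lemma suspLie_Y:
  assumes Y: "low 1 Y"
  shows "plc (Ab (susp Lie)) (ev EE (W Y) - 1) = Y"
proof -
  have W1: "low 1 (W Y)" by (rule low1_W)
  have "plc (Ab (susp Lie)) (ev EE (W Y) - 1)
      = ser (\<lambda>k. K (moebius k / of_nat k) * ev (fps_ln 1) (P k (ev EE (W Y) - 1)))"
    by (rule plc_susp_Lie[OF low1_EE])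
  also have "\<dots> = ser (\<lambda>k. K (moebius k / of_nat k) * ser (\<lambda>j. K (1 / of_nat j) * P (k * j) Y))"
  proof (intro ser_cong)
    fix k :: nat assume k: "1 \<le> k"
    have "P k (ev EE (W Y) - 1) = ev EE (P k (W Y)) - 1"
      by (simp add: P_diff P_one[OF k] P_ev[OF k W1])
    moreover have "low 1 (P k (W Y))" by (rule low_P'[OF k W1])
    moreover have "P k (W Y) = ser (\<lambda>j. K (1 / of_nat j) * P (k * j) Y)"
      unfolding W_def P_ser[OF k W_terms_low[OF Y]]
      by (intro ser_cong) (simp add: P_K_mult P_P[OF k])
    ultimately show "K (moebius k / of_nat k) * ev (fps_ln 1) (P k (ev EE (W Y) - 1)) =
                     K (moebius k / of_nat k) * ser (\<lambda>j. K (1 / of_nat j) * P (k * j) Y)"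
      by (simp add: ev_ln_exp)
  qed
  also have "\<dots> = Y" by (rule mob_ser[OF Y])
  finally show ?thesis .
qed

lemma uniq:
  assumes y: "low 1 y" and q: "low 1 q"
    and ey: "y * ev EE (W y) = Ab (pvar 1)" and eq: "q * ev EE (W q) = Ab (pvar 1)"
  shows "y = q"
proof (rule eq_by_low)
  fix n show "low n (y - q)"
  proof (induction n)
    case 0 show ?case by simp
  next
    case (Suc n)
    define e where "e x = ev EE (W x) - 1" for x
    have ye: "y = Ab (pvar 1) - y * e y" using ey by (simp add: e_def algebra_simps)
    have qe: "q = Ab (pvar 1) - q * e q" using eq by (simp add: e_def algebra_simps)
    have "y - q = (q - y) * e q + y * (e q - e y)"
      by (subst (1) ye, subst (1) qe) (simp add: algebra_simps)
    moreover have "low (n + 1) ((q - y) * e q)"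
    proof (rule low_mult)
      show "low n (q - y)" using Suc low_uminus[of n "y - q"] by simp
      show "low 1 (e q)" by (simp add: e_def low1_EE)
    qed
    moreover have "low (1 + n) (y * (e q - e y))"
    proof (rule low_mult[OF y])
      have "low n (W q - W y)" unfolding W_diff[symmetric]
        by (rule low_W) (use Suc low_uminus[of n "y - q"] in simp)
      hence "low n (ev EE (W q) - ev EE (W y))" by (rule ev_cont_u[OF low1_W low1_W])
      thus "low n (e q - e y)" by (simp add: e_def)
    qed
    ultimately show ?case using low_add[of "Suc n" "(q - y) * e q" "y * (e q - e y)"] by (simp add: Suc_eq_plus1 add.commute)
  qed
qed


unbundle fps_syntax
declare One_nat_def[simp del]

theorem mainTheorem8:
  fixes PreLie HALpa HALp HALa HAL :: sf
  assumes prelie0: "PreLie {#} = 0"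
    and prelie: "PreLie = sf_mult (pvar 1) (sf_add sf_one (sf_comp Comm PreLie))"
    and halpa: "HALpa = sf_mult (pvar 1)
                  (sf_comp p1_over_1_plus_p1 (sf_comp Comm (sf_sub (pvar 1) HALpa)))"
    and halp: "HALp = sf_mult (pvar 1)
                  (sf_comp (susp Lie) (sf_comp Comm (sf_sub (pvar 1) HALpa)))"
    and hala: "HALa = sf_comp (sf_sub Comm (pvar 1)) (sf_sub (pvar 1) HALpa)"
    and hal: "HAL = sf_sub (sf_add HALp HALa) HALpa"
  shows "sf_comp Comm (susp PreLie) =
           sf_sub (pvar 1) (sf_sub (sf_mult (pvar 1) (dp1 HAL)) HAL)"
proof -
  define p where "p = Ab (pvar 1)"
  define PL where "PL = Ab PreLie"
  define HA where "HA = Ab HALpa"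
  define Y where "Y = p - HA"
  have lp: "low 1 p" unfolding p_def by (rule low_p1)
  have HAeq: "HA = p * plc (ev Alt p) (plc (Ab Comm) Y)"
    using arg_cong[OF halpa, of Ab]
    by (simp add: HA_def Y_def p_def Ab_sf_mult Ab_sf_comp Ab_sf_sub Ab_P1)
  have lHA: "low 1 HA" by (subst HAeq) (rule low_mult_left[OF lp])
  have lY: "low 1 Y" unfolding Y_def by (rule low_diff[OF lp lHA])
  define G where "G = ev EE (W Y)"
  define Z where "Z = G - 1"
  have Zeq: "plc (Ab Comm) Y = Z" by (simp add: plc_Comm[OF lY] Z_def G_def)
  have lZ: "low 1 Z" by (simp add: Z_def G_def low1_EE)
  have HA2: "HA = p * ev Alt Z"
  proof -
    have "plc (ev Alt p) Z = ev Alt (plc p Z)" by (rule plc_ev[OF lZ lp])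
    also have "plc p Z = Z" unfolding p_def by (rule plc_p1[OF lZ])
    finally show ?thesis using HAeq Zeq by simp
  qed
  have altZ: "ev Alt Z * (1 + Z) = Z"
  proof -
    have "1 + Z = ev (1 + fps_X) Z" by (simp add: ev_add ev_1[OF lZ] ev_X[OF lZ])
    hence "ev Alt Z * (1 + Z) = ev (Alt * (1 + fps_X)) Z" by (simp add: ev_mult[OF lZ])
    thus ?thesis by (simp add: Alt_mult ev_X[OF lZ])
  qed
  have G1: "G = 1 + Z" by (simp add: Z_def)
  have YG: "Y * G = p"
  proof -
    have "Y * G = p * (1 + Z) - p * (ev Alt Z * (1 + Z))"
      by (simp add: Y_def G1 HA2 algebra_simps)
    also have "\<dots> = p * (1 + Z) - p * Z" by (simp only: altZ)
    also have "\<dots> = p" by (simp add: algebra_simps)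
    finally show ?thesis .
  qed
  have PLeq: "PL = p * (1 + plc (Ab Comm) PL)"
    using arg_cong[OF prelie, of Ab]
    by (simp add: PL_def p_def Ab_sf_mult Ab_sf_add Ab_sf_one Ab_sf_comp)
  have lPL: "low 1 PL" by (simp add: low1_iff PL_def prelie0)
  have PL2: "PL = p * ev EE (W PL)" using PLeq by (simp add: plc_Comm[OF lPL])
  define Q where "Q = - neg PL"
  have lQ: "low 1 Q" unfolding Q_def by (simp add: neg_low[OF lPL])
  have negp: "neg p = - p" by (simp add: p_def neg_pvar)
  have nPL: "neg PL = - p * ev EE (- W Q)"
  proof -
    have "neg PL = neg p * neg (ev EE (W PL))" by (subst PL2) (rule neg_mult)
    also have "neg (ev EE (W PL)) = ev EE (W (neg PL))" by (simp add: neg_ev[OF low1_W] neg_W)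
    also have "W (neg PL) = - W Q" by (simp add: Q_def W_uminus)
    finally show ?thesis by (simp add: negp)
  qed
  have Qeq: "Q = p * ev EE (- W Q)"
  proof -
    have "Q = - neg PL" by (simp add: Q_def)
    also have "\<dots> = p * ev EE (- W Q)" by (subst nPL) simp
    finally show ?thesis .
  qed
  have QG: "Q * ev EE (W Q) = p"
  proof -
    have "ev EE (- W Q) = ev (fps_exp (-1)) (W Q)" by (simp add: ev_neg_arg EE_neg)
    hence "Q * ev EE (W Q) = p * (ev (fps_exp (-1)) (W Q) * ev EE (W Q))"
      using Qeq by (metis mult.assoc)
    also have "\<dots> = p * ev (fps_exp (-1) * EE) (W Q)" by (simp add: ev_mult[OF low1_W])
    also have "\<dots> = p" by (simp add: EE_inv ev_1[OF low1_W])
    finally show ?thesis .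
  qed
  have QY: "Q = Y" by (rule uniq[OF lQ lY]) (use QG YG G_def p_def in simp_all)
  have HP: "Ab HALp = p * Y"
  proof -
    have "Ab HALp = p * plc (Ab (susp Lie)) (plc (Ab Comm) Y)"
      using arg_cong[OF halp, of Ab]
      by (simp add: HA_def Y_def p_def Ab_sf_mult Ab_sf_comp Ab_sf_sub)
    also have "plc (Ab Comm) Y = ev EE (W Y) - 1" by (rule plc_Comm[OF lY])
    also have "plc (Ab (susp Lie)) \<dots> = Y" by (rule suspLie_Y[OF lY])
    finally show ?thesis .
  qed
  have HAa: "Ab HALa = Z - Y"
  proof -
    have "Ab HALa = plc (Ab Comm - p) Y"
      using arg_cong[OF hala, of Ab] by (simp add: HA_def Y_def p_def Ab_sf_comp Ab_sf_sub)
    also have "\<dots> = Z - Y" by (simp add: plc_diff Zeq p_def plc_p1[OF lY])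
    finally show ?thesis .
  qed
  have HALeq: "Ab HAL = p * Y + Z - p"
  proof -
    have "Ab HAL = Ab HALp + Ab HALa - HA" by (simp add: hal HA_def Ab_sf_sub Ab_sf_add)
    also have "HA = p - Y" by (simp add: Y_def)
    finally show ?thesis by (simp add: HP HAa)
  qed
  have Dp_p: "Dp p = 1" by (simp add: p_def Dp_p1)
  have DG: "Dp G = G * Dp Y"
  proof -
    have "Dp G = ev (fps_deriv EE) (W Y) * Dp (W Y)" unfolding G_def by (rule Dp_ev[OF low1_W])
    also have "fps_deriv EE = EE" by (simp add: EE_def)
    also have "Dp (W Y) = Dp Y" by (rule Dp_W[OF lY])
    finally show ?thesis by (simp add: G_def)
  qed
  have key: "p * Dp Y + G * Dp Y = 1"
  proof -
    have "Dp (Y * G) = Dp p" by (simp add: YG)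
    hence h: "Dp Y * G + Y * (G * Dp Y) = 1" by (simp add: Dp_mult DG Dp_p)
    have "Y * (G * Dp Y) = p * Dp Y" by (simp add: mult.assoc[symmetric] YG)
    with h have "Dp Y * G + p * Dp Y = 1" by simp
    thus ?thesis by (simp add: mult.commute add.commute)
  qed
  have DHAL: "Dp (Ab HAL) = Y"
  proof -
    have "Dp (Ab HAL) = (Dp p * Y + p * Dp Y) + Dp G - Dp p"
      by (simp add: HALeq Dp_diff Dp_add Dp_mult Z_def Dp_one)
    also have "\<dots> = Y + (p * Dp Y + G * Dp Y) - 1" by (simp add: Dp_p DG algebra_simps)
    also have "\<dots> = Y" by (simp add: key)
    finally show ?thesis .
  qed
  have LHS: "Ab (sf_comp Comm (susp PreLie)) = Z"
    by (simp add: Ab_sf_comp susp_Ab PL_def[symmetric] Q_def[symmetric] QY Zeq)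
  have RHS: "Ab (sf_sub (pvar 1) (sf_sub (sf_mult (pvar 1) (dp1 HAL)) HAL)) = Z"
    by (simp only: Ab_sf_sub Ab_sf_mult Ab_dp1 p_def[symmetric] DHAL) (simp add: HALeq)
  have "Ab (sf_comp Comm (susp PreLie)) = Ab (sf_sub (pvar 1) (sf_sub (sf_mult (pvar 1) (dp1 HAL)) HAL))"
    using LHS RHS by simp
  thus ?thesis by (simp add: Ab_inject)
qed


end
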